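(* Let $Q=\tau(t)\partial_t+\xi(x)\partial_x+[h(t)u+r(t,x)]\partial_u$ be a nonzero vector field, with $\tau,\xi,h,r$ smooth. Then there is a change of variables of the form $\bar t=T(t)$, $\bar x=X(x)$, $v=U(t)u+Y(t,x)$ with $T'X'U\neq0$, or of the form $\bar t=T(x)$, $\bar x=X(t)$, $v=\Psi(x)\Phi(t,x)u+Y(t,x)$ with $T'X'\Psi\neq0$ and $\Phi(t,x)=\exp[-\int g(t,x)\,dt]$ for a given smooth function $g$ with $g_x\neq0$, which transforms $Q$ into one of the following operators (written in the new variables, still denoted $t,x,u$): $$t\partial_t+x\partial_x;\quad \partial_t;\quad \partial_x+tu\partial_u;\quad \partial_x+\epsilon u\partial_u\ (\epsilon=0,1);\quad tu\partial_u;\quad u\partial_u;\quad r(t,x)\partial_u\ \ (r\neq0).$$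
   Context: These changes of variables form the equivalence group of the class of equations $u_{tx}=g(t,x)u_x+f(t,x,u)$ ($g_x\neq0$, $f_{uu}\neq0$), and vector fields of the given form are the Lie point symmetry generators of equations in this class. All considerations are local. *)

theory Defs
  imports "HOL-Analysis.Analysis"
begin

type_synonym R3 = "real \<times> real \<times> real"

definition smooth1 :: "real set \<Rightarrow> (real \<Rightarrow> real) \<Rightarrow> bool" where
  "smooth1 S f \<longleftrightarrow>
     (\<forall>n. \<forall>x\<in>S. ((deriv ^^ n) f has_real_derivative (deriv ^^ Suc n) f x) (at x))"

fun Ck2 :: "nat \<Rightarrow> (real \<times> real) set \<Rightarrow> (real \<times> real \<Rightarrow> real) \<Rightarrow> bool" where
  "Ck2 0 S f = continuous_on S f"
| "Ck2 (Suc k) S f =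
     (\<exists>f1 f2. (\<forall>p\<in>S. (f has_derivative (\<lambda>(a, b). a * f1 p + b * f2 p)) (at p))
              \<and> Ck2 k S f1 \<and> Ck2 k S f2)"

definition smooth2 :: "(real \<times> real) set \<Rightarrow> (real \<times> real \<Rightarrow> real) \<Rightarrow> bool" where
  "smooth2 S f \<longleftrightarrow> (\<forall>k. Ck2 k S f)"

definition pd_t :: "(real \<times> real \<Rightarrow> real) \<Rightarrow> real \<times> real \<Rightarrow> real" where
  "pd_t f p = deriv (\<lambda>s. f (s, snd p)) (fst p)"

definition pd_x :: "(real \<times> real \<Rightarrow> real) \<Rightarrow> real \<times> real \<Rightarrow> real" where
  "pd_x f p = deriv (\<lambda>s. f (fst p, s)) (snd p)"

definition Qfield :: "(real \<Rightarrow> real) \<Rightarrow> (real \<Rightarrow> real) \<Rightarrow> (real \<Rightarrow> real)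
                     \<Rightarrow> (real \<times> real \<Rightarrow> real) \<Rightarrow> R3 \<Rightarrow> R3" where
  "Qfield \<tau> \<xi> h r = (\<lambda>(t, x, u). (\<tau> t, \<xi> x, h t * u + r (t, x)))"

definition pushes_to :: "(R3 \<Rightarrow> R3) \<Rightarrow> R3 set \<Rightarrow> (R3 \<Rightarrow> R3) \<Rightarrow> (R3 \<Rightarrow> R3) \<Rightarrow> bool" where
  "pushes_to \<phi> V Q P \<longleftrightarrow>
     (\<forall>p\<in>V. \<exists>D. (\<phi> has_derivative D) (at p) \<and> D (Q p) = P (\<phi> p))"

definition cv_first :: "real set \<Rightarrow> real set \<Rightarrow> (R3 \<Rightarrow> R3) \<Rightarrow> bool" where
  "cv_first I J \<phi> \<longleftrightarrow>
     (\<exists>T X U Y. smooth1 I T \<and> smooth1 J X \<and> smooth1 I U \<and> smooth2 (I \<times> J) Y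
        \<and> (\<forall>t\<in>I. deriv T t \<noteq> 0 \<and> U t \<noteq> 0) \<and> (\<forall>x\<in>J. deriv X x \<noteq> 0)
        \<and> \<phi> = (\<lambda>(t, x, u). (T t, X x, U t * u + Y (t, x))))"

text \<open>Changes of variables of the second kind on the box I x J x R:
  tbar = T(x), xbar = X(t), v = Psi(x) Phi(t,x) u + Y(t,x), with T' X' Psi nonzero and
  Phi = exp(- integral g dt), i.e. Phi = exp G with G_t = - g.\<close>
definition cv_second :: "(real \<times> real \<Rightarrow> real) \<Rightarrow> real set \<Rightarrow> real set \<Rightarrow> (R3 \<Rightarrow> R3) \<Rightarrow> bool" where
  "cv_second g I J \<phi> \<longleftrightarrow>
     (\<exists>T X \<Psi> G Y. smooth1 J T \<and> smooth1 I X \<and> smooth1 J \<Psi> \<and> smooth2 (I \<times> J) G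
        \<and> smooth2 (I \<times> J) Y
        \<and> (\<forall>p\<in>I \<times> J. pd_t G p = - g p)
        \<and> (\<forall>x\<in>J. deriv T x \<noteq> 0 \<and> \<Psi> x \<noteq> 0) \<and> (\<forall>t\<in>I. deriv X t \<noteq> 0)
        \<and> \<phi> = (\<lambda>(t, x, u). (T x, X t, \<Psi> x * exp (G (t, x)) * u + Y (t, x))))"

text \<open>The last family r(t,x) d_u is handled separately in the theorem,
  since the condition r \<noteq> 0 refers to the domain.\<close>
definition canonical_list :: "(R3 \<Rightarrow> R3) set" where
  "canonical_list =
     {(\<lambda>(t, x, u). (t, x, 0)),
      (\<lambda>(t, x, u). (1, 0, 0)),
      (\<lambda>(t, x, u). (0, 1, t * u)),
      (\<lambda>(t, x, u). (0, 1, 0)),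
      (\<lambda>(t, x, u). (0, 1, u)),
      (\<lambda>(t, x, u). (0, 0, t * u)),
      (\<lambda>(t, x, u). (0, 0, u))}"

end

theory Submission
  imports Defs
begin


lemma Ck2_mono: "Ck2 (Suc k) S f \<Longrightarrow> Ck2 k S f"
proof (induction k arbitrary: f)
  case 0
  then obtain f1 f2 where d: "\<forall>p\<in>S. (f has_derivative (\<lambda>(a, b). a * f1 p + b * f2 p)) (at p)"
    by auto
  show ?case
    using d by (auto intro!: continuous_at_imp_continuous_on has_derivative_continuous)
next
  case (Suc k)
  from Suc.prems obtain f1 f2 where
    d: "\<forall>p\<in>S. (f has_derivative (\<lambda>(a, b). a * f1 p + b * f2 p)) (at p)"
    and c: "Ck2 (Suc k) S f1" "Ck2 (Suc k) S f2"
    by auto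
  show ?case using d Suc.IH[OF c(1)] Suc.IH[OF c(2)] by auto
qed

lemma Ck2_SucI:
  assumes "\<And>p. p \<in> S \<Longrightarrow> (f has_derivative (\<lambda>(a, b). a * da p + b * db p)) (at p)"
    "Ck2 k S da" "Ck2 k S db"
  shows "Ck2 (Suc k) S f"
proof -
  have "\<forall>p\<in>S. (f has_derivative (\<lambda>(a, b). a * da p + b * db p)) (at p)"
    using assms(1) by blast
  then show ?thesis using assms(2,3) by auto
qed

lemma Ck2_le: "k \<le> m \<Longrightarrow> Ck2 m S f \<Longrightarrow> Ck2 k S f"
proof (induction m)
  case 0 then show ?case by simp
next
  case (Suc m)
  then show ?case
    by (metis Ck2_mono le_Suc_eq)
qed

lemma Ck2_cong:
  assumes "open S" "\<And>p. p \<in> S \<Longrightarrow> f p = g p" "Ck2 k S f"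
  shows "Ck2 k S g"
  using assms(2,3)
proof (induction k arbitrary: f g)
  case 0
  then show ?case using continuous_on_cong by (metis Ck2.simps(1))
next
  case (Suc k)
  from Suc.prems obtain f1 f2 where
    d: "\<forall>p\<in>S. (f has_derivative (\<lambda>(a, b). a * f1 p + b * f2 p)) (at p)"
    and c: "Ck2 k S f1" "Ck2 k S f2"
    by auto
  show ?case
  proof (rule Ck2_SucI[OF _ c])
    fix p assume p: "p \<in> S"
    show "(g has_derivative (\<lambda>(a, b). a * f1 p + b * f2 p)) (at p)"
      by (rule has_derivative_transform_within_open[OF _ assms(1) p Suc.prems(1)]) (use d p in auto)
  qed
qed

lemma Ck2_const: "Ck2 k S (\<lambda>_. c)"
proof (induction k arbitrary: c)
  case 0 then show ?case by simp
next
  case (Suc k)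
  show ?case
    by (rule Ck2_SucI[where da="\<lambda>_. 0" and db="\<lambda>_. 0", OF _ Suc.IH Suc.IH],
        rule has_derivative_eq_rhs[OF has_derivative_const]) (auto simp: fun_eq_iff)
qed

lemma Ck2_fst: "Ck2 k S fst"
proof (cases k)
  case 0 then show ?thesis by (simp add: continuous_on_fst)
next
  case (Suc m)
  show ?thesis unfolding Suc
    by (rule Ck2_SucI[where da="\<lambda>_. 1" and db="\<lambda>_. 0", OF _ Ck2_const Ck2_const],
        rule has_derivative_eq_rhs[OF has_derivative_fst[OF has_derivative_ident]]) (auto simp: fun_eq_iff)
qed

lemma Ck2_snd: "Ck2 k S snd"
proof (cases k)
  case 0 then show ?thesis by (simp add: continuous_on_snd)
next
  case (Suc m)
  show ?thesis unfolding Suc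
    by (rule Ck2_SucI[where da="\<lambda>_. 0" and db="\<lambda>_. 1", OF _ Ck2_const Ck2_const],
        rule has_derivative_eq_rhs[OF has_derivative_snd[OF has_derivative_ident]]) (auto simp: fun_eq_iff)
qed

lemma Ck2_add:
  assumes "Ck2 k S f" "Ck2 k S g"
  shows "Ck2 k S (\<lambda>p. f p + g p)"
  using assms
proof (induction k arbitrary: f g)
  case 0 then show ?case by (auto intro: continuous_on_add)
next
  case (Suc k)
  from Suc.prems(1) obtain f1 f2 where
    df: "\<forall>p\<in>S. (f has_derivative (\<lambda>(a, b). a * f1 p + b * f2 p)) (at p)"
    and cf: "Ck2 k S f1" "Ck2 k S f2" by auto
  from Suc.prems(2) obtain g1 g2 where
    dg: "\<forall>p\<in>S. (g has_derivative (\<lambda>(a, b). a * g1 p + b * g2 p)) (at p)"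
    and cg: "Ck2 k S g1" "Ck2 k S g2" by auto
  have d: "((\<lambda>p. f p + g p) has_derivative
        (\<lambda>(a, b). a * (f1 p + g1 p) + b * (f2 p + g2 p))) (at p)" if p: "p \<in> S" for p
  proof -
    have "(f has_derivative (\<lambda>(a, b). a * f1 p + b * f2 p)) (at p)"
      "(g has_derivative (\<lambda>(a, b). a * g1 p + b * g2 p)) (at p)" using df dg p by auto
    from has_derivative_add[OF this] show ?thesis
      by (rule has_derivative_eq_rhs) (auto simp: fun_eq_iff algebra_simps)
  qed
  show ?case
    by (rule Ck2_SucI[where da="\<lambda>p. f1 p + g1 p" and db="\<lambda>p. f2 p + g2 p", OF d
          Suc.IH[OF cf(1) cg(1)] Suc.IH[OF cf(2) cg(2)]])
qed

lemma Ck2_mult: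
  assumes "Ck2 k S f" "Ck2 k S g"
  shows "Ck2 k S (\<lambda>p. f p * g p)"
  using assms
proof (induction k arbitrary: f g)
  case 0 then show ?case by (auto intro: continuous_on_mult)
next
  case (Suc k)
  from Suc.prems(1) obtain f1 f2 where
    df: "\<forall>p\<in>S. (f has_derivative (\<lambda>(a, b). a * f1 p + b * f2 p)) (at p)"
    and cf: "Ck2 k S f1" "Ck2 k S f2" by auto
  from Suc.prems(2) obtain g1 g2 where
    dg: "\<forall>p\<in>S. (g has_derivative (\<lambda>(a, b). a * g1 p + b * g2 p)) (at p)"
    and cg: "Ck2 k S g1" "Ck2 k S g2" by auto
  have f0: "Ck2 k S f" by (rule Ck2_mono[OF Suc.prems(1)])
  have g0: "Ck2 k S g" by (rule Ck2_mono[OF Suc.prems(2)])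
  have d: "((\<lambda>p. f p * g p) has_derivative
        (\<lambda>(a, b). a * (f p * g1 p + f1 p * g p) + b * (f p * g2 p + f2 p * g p))) (at p)"
    if p: "p \<in> S" for p
  proof -
    have "(f has_derivative (\<lambda>(a, b). a * f1 p + b * f2 p)) (at p)"
      "(g has_derivative (\<lambda>(a, b). a * g1 p + b * g2 p)) (at p)" using df dg p by auto
    from has_derivative_mult[OF this] show ?thesis
      by (rule has_derivative_eq_rhs) (auto simp: fun_eq_iff algebra_simps)
  qed
  have e3: "Ck2 k S (\<lambda>p. f p * g1 p + f1 p * g p)"
    by (rule Ck2_add[OF Suc.IH[OF f0 cg(1)] Suc.IH[OF cf(1) g0]])
  have e4: "Ck2 k S (\<lambda>p. f p * g2 p + f2 p * g p)"
    by (rule Ck2_add[OF Suc.IH[OF f0 cg(2)] Suc.IH[OF cf(2) g0]])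
  show ?case
    by (rule Ck2_SucI[where da="\<lambda>p. f p * g1 p + f1 p * g p"
          and db="\<lambda>p. f p * g2 p + f2 p * g p", OF d e3 e4])
qed

lemma Ck2_comp:
  assumes "Ck2 k S F" "Ck2 k S' p" "Ck2 k S' q" "\<And>z. z \<in> S' \<Longrightarrow> (p z, q z) \<in> S"
  shows "Ck2 k S' (\<lambda>z. F (p z, q z))"
  using assms
proof (induction k arbitrary: F p q)
  case 0
  have "continuous_on S' (\<lambda>z. (p z, q z))" using 0 by (auto intro: continuous_on_Pair)
  moreover have "(\<lambda>z. (p z, q z)) ` S' \<subseteq> S" using 0 by (simp add: image_subset_iff)
  ultimately show ?case using 0
    by (auto intro!: continuous_on_compose2[of S F S' "\<lambda>z. (p z, q z)"])
next
  case (Suc k)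
  from Suc.prems(1) obtain F1 F2 where
    dF: "\<forall>w\<in>S. (F has_derivative (\<lambda>(a, b). a * F1 w + b * F2 w)) (at w)"
    and cF: "Ck2 k S F1" "Ck2 k S F2" by auto
  from Suc.prems(2) obtain p1 p2 where
    dp: "\<forall>z\<in>S'. (p has_derivative (\<lambda>(a, b). a * p1 z + b * p2 z)) (at z)"
    and cp: "Ck2 k S' p1" "Ck2 k S' p2" by auto
  from Suc.prems(3) obtain q1 q2 where
    dq: "\<forall>z\<in>S'. (q has_derivative (\<lambda>(a, b). a * q1 z + b * q2 z)) (at z)"
    and cq: "Ck2 k S' q1" "Ck2 k S' q2" by auto
  have p0: "Ck2 k S' p" by (rule Ck2_mono[OF Suc.prems(2)])
  have q0: "Ck2 k S' q" by (rule Ck2_mono[OF Suc.prems(3)])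
  have d: "((\<lambda>z. F (p z, q z)) has_derivative
        (\<lambda>(a, b). a * (F1 (p z, q z) * p1 z + F2 (p z, q z) * q1 z)
                + b * (F1 (p z, q z) * p2 z + F2 (p z, q z) * q2 z))) (at z)" if z: "z \<in> S'" for z
  proof -
    have pq: "((\<lambda>z. (p z, q z)) has_derivative
        (\<lambda>v. ((\<lambda>(a, b). a * p1 z + b * p2 z) v, (\<lambda>(a, b). a * q1 z + b * q2 z) v))) (at z)"
      by (rule has_derivative_Pair[OF dp[rule_format, OF z] dq[rule_format, OF z]])
    have "(F has_derivative (\<lambda>(a, b). a * F1 (p z, q z) + b * F2 (p z, q z))) (at (p z, q z))"
      by (rule dF[rule_format, OF Suc.prems(4)[OF z]])
    from has_derivative_compose[OF pq this] show ?thesis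
      by (rule has_derivative_eq_rhs) (simp add: fun_eq_iff split_beta algebra_simps)
  qed
  have e1: "Ck2 k S' (\<lambda>z. F1 (p z, q z))" by (rule Suc.IH[OF cF(1) p0 q0 Suc.prems(4)])
  have e2: "Ck2 k S' (\<lambda>z. F2 (p z, q z))" by (rule Suc.IH[OF cF(2) p0 q0 Suc.prems(4)])
  have e3: "Ck2 k S' (\<lambda>z. F1 (p z, q z) * p1 z + F2 (p z, q z) * q1 z)"
    by (rule Ck2_add[OF Ck2_mult[OF e1 cp(1)] Ck2_mult[OF e2 cq(1)]])
  have e4: "Ck2 k S' (\<lambda>z. F1 (p z, q z) * p2 z + F2 (p z, q z) * q2 z)"
    by (rule Ck2_add[OF Ck2_mult[OF e1 cp(2)] Ck2_mult[OF e2 cq(2)]])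
  show ?case
    by (rule Ck2_SucI[where da="\<lambda>z. F1 (p z, q z) * p1 z + F2 (p z, q z) * q1 z"
          and db="\<lambda>z. F1 (p z, q z) * p2 z + F2 (p z, q z) * q2 z", OF d e3 e4])
qed



lemma smooth1_D: "smooth1 S f \<Longrightarrow> x \<in> S \<Longrightarrow> (f has_real_derivative deriv f x) (at x)"
  unfolding smooth1_def by (drule spec[of _ 0]) simp

lemma funpow_deriv_Suc: "(deriv ^^ Suc n) f = (deriv ^^ n) (deriv f)"
  by (simp only: funpow_Suc_right o_apply)

lemma smooth1_deriv: "smooth1 S f \<Longrightarrow> smooth1 S (deriv f)"
  unfolding smooth1_def
proof (intro allI ballI)
  fix n x assume H: "\<forall>n. \<forall>x\<in>S. ((deriv ^^ n) f has_real_derivative (deriv ^^ Suc n) f x) (at x)"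
    and x: "x \<in> S"
  from H[rule_format, of x "Suc n"] x
  show "((deriv ^^ n) (deriv f) has_real_derivative (deriv ^^ Suc n) (deriv f) x) (at x)"
    by (simp only: funpow_deriv_Suc)
qed

lemma smooth1_cont: "smooth1 S f \<Longrightarrow> continuous_on S f"
  by (auto intro!: continuous_at_imp_continuous_on DERIV_isCont dest: smooth1_D)

lemma slice1:
  assumes "(f has_derivative (\<lambda>(a, b). a * A + b * B)) (at (x, y))"
  shows "((\<lambda>s. f (s, y)) has_real_derivative A) (at x)"
proof -
  have p: "((\<lambda>s. (s, y)) has_derivative (\<lambda>h. (h, 0))) (at x)"
    by (rule has_derivative_Pair[OF has_derivative_ident has_derivative_const])
  from has_derivative_compose[OF p assms] show ?thesis
    unfolding has_field_derivative_def
    by (rule has_derivative_eq_rhs) (auto simp: fun_eq_iff)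
qed

lemma slice2:
  assumes "(f has_derivative (\<lambda>(a, b). a * A + b * B)) (at (x, y))"
  shows "((\<lambda>s. f (x, s)) has_real_derivative B) (at y)"
proof -
  have p: "((\<lambda>s. (x, s)) has_derivative (\<lambda>h. (0, h))) (at y)"
    by (rule has_derivative_Pair[OF has_derivative_const has_derivative_ident])
  from has_derivative_compose[OF p assms] show ?thesis
    unfolding has_field_derivative_def
    by (rule has_derivative_eq_rhs) (auto simp: fun_eq_iff)
qed

lemma smooth1_Ck2: "smooth1 V \<phi> \<Longrightarrow> Ck2 k (V \<times> UNIV) (\<lambda>z. \<phi> (fst z))"
proof (induction k arbitrary: \<phi>)
  case 0
  have "continuous_on (V \<times> UNIV) (\<lambda>z. \<phi> (fst z))"
    by (rule continuous_on_compose2[OF smooth1_cont[OF 0]]) (auto intro: continuous_intros)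
  then show ?case by simp
next
  case (Suc k)
  have d: "((\<lambda>z. \<phi> (fst z)) has_derivative (\<lambda>(a, b). a * deriv \<phi> (fst z) + b * 0)) (at z)"
    if z: "z \<in> V \<times> UNIV" for z
  proof -
    have "(\<phi> has_derivative (*) (deriv \<phi> (fst z))) (at (fst z))"
      using smooth1_D[OF Suc.prems] z unfolding has_field_derivative_def by auto
    from has_derivative_compose[OF has_derivative_fst[OF has_derivative_ident] this]
    show ?thesis by (rule has_derivative_eq_rhs) (auto simp: fun_eq_iff)
  qed
  show ?case
    by (rule Ck2_SucI[where da="\<lambda>z. deriv \<phi> (fst z)" and db="\<lambda>_. 0", OF d
          Suc.IH[OF smooth1_deriv[OF Suc.prems]] Ck2_const])
qed

lemma Ck2_fst_step:
  assumes V: "open V" and H: "\<forall>k. Ck2 k (V \<times> UNIV) (\<lambda>z. \<phi> (fst z))"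
  shows "\<forall>x\<in>V. (\<phi> has_real_derivative deriv \<phi> x) (at x)"
    and "\<forall>k. Ck2 k (V \<times> UNIV) (\<lambda>z. deriv \<phi> (fst z))"
proof -
  have *: "(\<phi> has_real_derivative da (x, y)) (at x)"
    if "\<forall>p\<in>V \<times> UNIV. ((\<lambda>z. \<phi> (fst z)) has_derivative (\<lambda>(a, b). a * da p + b * db p)) (at p)"
      "x \<in> V" for da db x y
  proof -
    have "((\<lambda>z. \<phi> (fst z)) has_derivative (\<lambda>(a, b). a * da (x, y) + b * db (x, y))) (at (x, y))"
      using that by auto
    from slice1[OF this] show ?thesis by simp
  qed
  from H have "Ck2 (Suc 0) (V \<times> UNIV) (\<lambda>z. \<phi> (fst z))" by blast
  then obtain da db where
    d: "\<forall>p\<in>V \<times> UNIV. ((\<lambda>z. \<phi> (fst z)) has_derivative (\<lambda>(a, b). a * da p + b * db p)) (at p)"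
    by auto
  show "\<forall>x\<in>V. (\<phi> has_real_derivative deriv \<phi> x) (at x)"
  proof
    fix x assume x: "x \<in> V"
    from *[OF d x, of 0] have "(\<phi> has_real_derivative da (x, 0)) (at x)" .
    then show "(\<phi> has_real_derivative deriv \<phi> x) (at x)" using DERIV_imp_deriv by metis
  qed
  show "\<forall>k. Ck2 k (V \<times> UNIV) (\<lambda>z. deriv \<phi> (fst z))"
  proof
    fix k
    from H have "Ck2 (Suc k) (V \<times> UNIV) (\<lambda>z. \<phi> (fst z))" by blast
    then obtain da db where
      d: "\<forall>p\<in>V \<times> UNIV. ((\<lambda>z. \<phi> (fst z)) has_derivative (\<lambda>(a, b). a * da p + b * db p)) (at p)"
      and c: "Ck2 k (V \<times> UNIV) da" by auto
    show "Ck2 k (V \<times> UNIV) (\<lambda>z. deriv \<phi> (fst z))"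
    proof (rule Ck2_cong[OF _ _ c])
      show "open (V \<times> (UNIV :: real set))" using V by (simp add: open_Times)
      fix p :: "real \<times> real" assume p: "p \<in> V \<times> UNIV"
      then obtain x y where xy: "p = (x, y)" "x \<in> V" by auto
      from *[OF d xy(2), of y] have "(\<phi> has_real_derivative da (x, y)) (at x)" .
        then have "deriv \<phi> x = da (x, y)" by (rule DERIV_imp_deriv)
      then show "da p = deriv \<phi> (fst p)" using xy by simp
    qed
  qed
qed

lemma Ck2_smooth1:
  assumes V: "open V" and H: "\<forall>k. Ck2 k (V \<times> UNIV) (\<lambda>z. \<phi> (fst z))"
  shows "smooth1 V \<phi>"
proof -
  have "\<forall>\<phi>. (\<forall>k. Ck2 k (V \<times> UNIV) (\<lambda>z. \<phi> (fst z))) \<longrightarrow>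
      (\<forall>x\<in>V. ((deriv ^^ n) \<phi> has_real_derivative (deriv ^^ Suc n) \<phi> x) (at x))" for n
  proof (induction n)
    case 0
    show ?case using Ck2_fst_step(1)[OF V] by simp
  next
    case (Suc n)
    show ?case
    proof (intro allI impI)
      fix \<phi> assume H: "\<forall>k. Ck2 k (V \<times> UNIV) (\<lambda>z. \<phi> (fst z))"
      have "\<forall>x\<in>V. ((deriv ^^ n) (deriv \<phi>) has_real_derivative (deriv ^^ Suc n) (deriv \<phi>) x) (at x)"
        using Suc.IH Ck2_fst_step(2)[OF V H] by blast
      then show "\<forall>x\<in>V. ((deriv ^^ Suc n) \<phi> has_real_derivative (deriv ^^ Suc (Suc n)) \<phi> x) (at x)"
        by (simp only: funpow_deriv_Suc[of n] funpow_deriv_Suc[of "Suc n"])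
    qed
  qed
  then show ?thesis using H unfolding smooth1_def by blast
qed

lemma smooth1_exp: "smooth1 UNIV exp"
proof -
  have e: "deriv exp = exp" by (rule ext) (rule DERIV_imp_deriv[OF DERIV_exp])
  have pw: "(deriv ^^ n) exp = exp" for n by (induction n) (simp_all add: e)
  show ?thesis unfolding smooth1_def by (simp add: pw DERIV_exp del: funpow.simps)
qed

lemma Ck2_inverse_fst: "Ck2 k {z. fst z \<noteq> 0} (\<lambda>z. inverse (fst z))"
proof (induction k)
  case 0
  show ?case by (simp add: continuous_on_inverse continuous_on_fst)
next
  case (Suc k)
  have d: "((\<lambda>z. inverse (fst z)) has_derivative
      (\<lambda>(a, b). a * ((-1) * (inverse (fst z) * inverse (fst z))) + b * 0)) (at z)"
    if z: "z \<in> {z. fst z \<noteq> 0}" for z :: "real \<times> real"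
  proof -
    from Deriv.has_derivative_inverse[OF _ has_derivative_fst[OF has_derivative_ident], of z] z
    show ?thesis by (rule_tac has_derivative_eq_rhs) (auto simp: fun_eq_iff)
  qed
  show ?case
    by (rule Ck2_SucI[OF d Ck2_mult[OF Ck2_const Ck2_mult[OF Suc.IH Suc.IH]] Ck2_const])
qed

lemma Ck2_exp: "Ck2 k S f \<Longrightarrow> Ck2 k S (\<lambda>z. exp (f z))"
  using Ck2_comp[OF smooth1_Ck2[OF smooth1_exp, of k], of S f "\<lambda>_. 0"] Ck2_const by simp

lemma Ck2_inverse: "Ck2 k S f \<Longrightarrow> (\<And>z. z \<in> S \<Longrightarrow> f z \<noteq> 0) \<Longrightarrow> Ck2 k S (\<lambda>z. inverse (f z))"
  using Ck2_comp[OF Ck2_inverse_fst, of k S f "\<lambda>_. 0"] Ck2_const by simp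

lemma Ck2_sm1: "smooth1 V \<phi> \<Longrightarrow> Ck2 k S f \<Longrightarrow> (\<And>z. z \<in> S \<Longrightarrow> f z \<in> V) \<Longrightarrow>
    Ck2 k S (\<lambda>z. \<phi> (f z))"
  using Ck2_comp[OF smooth1_Ck2, of V \<phi> k S f "\<lambda>_. 0"] Ck2_const by simp

lemma Ck2_uminus: "Ck2 k S g \<Longrightarrow> Ck2 k S (\<lambda>z. - g z)"
proof -
  assume g: "Ck2 k S g"
  have "Ck2 k S (\<lambda>z. (-1) * g z)" by (rule Ck2_mult[OF Ck2_const g])
  then show ?thesis by simp
qed

lemma Ck2_diff: "Ck2 k S f \<Longrightarrow> Ck2 k S g \<Longrightarrow> Ck2 k S (\<lambda>z. f z - g z)"
proof -
  assume f: "Ck2 k S f" and g: "Ck2 k S g"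
  have "Ck2 k S (\<lambda>z. f z + - g z)" by (rule Ck2_add[OF f Ck2_uminus[OF g]])
  then show ?thesis by simp
qed

lemma Ck2_divide: "Ck2 k S f \<Longrightarrow> Ck2 k S g \<Longrightarrow> (\<And>z. z \<in> S \<Longrightarrow> g z \<noteq> 0) \<Longrightarrow>
    Ck2 k S (\<lambda>z. f z / g z)"
  using Ck2_mult[OF _ Ck2_inverse, of k S f g] by (simp add: divide_inverse)

lemma smooth2_pd:
  assumes S: "open S" and f: "smooth2 S f" and p: "p \<in> S"
  shows "(f has_derivative (\<lambda>(a, b). a * pd_t f p + b * pd_x f p)) (at p)"
proof -
  from f have "Ck2 (Suc 0) S f" unfolding smooth2_def by blast
  then obtain da db where
    d: "\<forall>p\<in>S. (f has_derivative (\<lambda>(a, b). a * da p + b * db p)) (at p)" by auto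
  obtain x y where xy: "p = (x, y)" by fastforce
  have dp: "(f has_derivative (\<lambda>(a, b). a * da (x, y) + b * db (x, y))) (at (x, y))"
    using d p xy by auto
  have "pd_t f p = da p" unfolding pd_t_def using slice1[OF dp] xy DERIV_imp_deriv by auto
  moreover have "pd_x f p = db p" unfolding pd_x_def using slice2[OF dp] xy DERIV_imp_deriv by auto
  ultimately show ?thesis using dp xy by simp
qed

lemma smooth2_slice1:
  "open S \<Longrightarrow> smooth2 S f \<Longrightarrow> (x, y) \<in> S \<Longrightarrow>
    ((\<lambda>s. f (s, y)) has_real_derivative pd_t f (x, y)) (at x)"
  by (rule slice1[OF smooth2_pd])

lemma smooth2_slice2:
  "open S \<Longrightarrow> smooth2 S f \<Longrightarrow> (x, y) \<in> S \<Longrightarrow>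
    ((\<lambda>s. f (x, s)) has_real_derivative pd_x f (x, y)) (at y)"
  by (rule slice2[OF smooth2_pd])



lemma Ck2_subset: "S' \<subseteq> S \<Longrightarrow> Ck2 k S f \<Longrightarrow> Ck2 k S' f"
proof (induction k arbitrary: f)
  case 0 then show ?case by (auto intro: continuous_on_subset)
next
  case (Suc k)
  from Suc.prems(2) obtain da db where
    d: "\<forall>p\<in>S. (f has_derivative (\<lambda>(a, b). a * da p + b * db p)) (at p)"
    and c: "Ck2 k S da" "Ck2 k S db" by auto
  show ?case
    by (rule Ck2_SucI[where da=da and db=db]) (use d Suc.prems(1) Suc.IH[OF Suc.prems(1)] c in auto)
qed

lemma param_int_hasderiv:
  fixes G G1 G2 :: "real \<times> real \<Rightarrow> real"
  assumes S0: "open S0" and box: "{a..b} \<times> C \<subseteq> S0" and C: "open C"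
    and dG: "\<forall>p\<in>S0. (G has_derivative (\<lambda>(x, y). x * G1 p + y * G2 p)) (at p)"
    and cG2: "continuous_on S0 G2"
    and t: "a < t" "t < b" and c: "c \<in> C"
  shows "((\<lambda>z. integral {a..fst z} (\<lambda>s. G (s, snd z))) has_derivative
          (\<lambda>(x, y). x * G (t, c) + y * integral {a..t} (\<lambda>s. G2 (s, c)))) (at (t, c))"
proof -
  obtain e where e: "e > 0" "ball c e \<subseteq> C" using C c open_contains_ball by blast
  define X where "X = ball c e"
  define Y where "Y = {a<..<b}"
  define f where "f = (\<lambda>x y. integral {a..y} (\<lambda>s. G (s, x)))"
  define I2 where "I2 = integral {a..t} (\<lambda>s. G2 (s, c))"
  have XC: "X \<subseteq> C" using e X_def by auto
  have contG: "continuous_on S0 G"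
    using dG by (auto intro!: continuous_at_imp_continuous_on has_derivative_continuous)
  have contGs: "continuous_on {a..b} (\<lambda>s. G (s, x))" if "x \<in> C" for x
    by (rule continuous_on_compose2[OF contG]) (use box that in \<open>auto intro: continuous_intros\<close>)
  have fx: "((\<lambda>x. f x t) has_derivative (\<lambda>h. h * I2)) (at c within X)"
  proof -
    have "((\<lambda>x. integral (cbox a t) (\<lambda>s. G (s, x))) has_field_derivative
        integral (cbox a t) (\<lambda>s. G2 (s, c))) (at c within X)"
    proof (rule leibniz_rule_field_derivative)
      fix x s assume x: "x \<in> X" and s: "s \<in> cbox a t"
      have xs: "(s, x) \<in> S0" using box x s XC t by (auto simp: cbox_interval)
      from slice2[of G "G1 (s, x)" "G2 (s, x)" s x] dG xs
      have "((\<lambda>y. G (s, y)) has_real_derivative G2 (s, x)) (at x)" by auto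
      then show "((\<lambda>x. G (s, x)) has_field_derivative G2 (s, x)) (at x within X)"
        by (rule has_field_derivative_at_within)
    next
      fix x assume x: "x \<in> X"
      have "continuous_on {a..t} (\<lambda>s. G (s, x))"
        by (rule continuous_on_subset[OF contGs]) (use x XC t in auto)
      then show "(\<lambda>s. G (s, x)) integrable_on cbox a t"
        by (simp add: cbox_interval integrable_continuous_real)
    next
      have "continuous_on (X \<times> {a..t}) (\<lambda>z. G2 (snd z, fst z))"
        by (rule continuous_on_compose2[OF cG2]) (use box XC t in \<open>fastforce intro!: continuous_intros\<close>)+
      then show "continuous_on (X \<times> cbox a t) (\<lambda>(x, s). G2 (s, x))"
        unfolding cbox_interval case_prod_unfold by simp
    next
      show "c \<in> X" using e X_def by auto
      show "convex X" unfolding X_def by simp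
    qed
    then show ?thesis
      unfolding f_def I2_def cbox_interval has_field_derivative_def
      by (rule has_derivative_eq_rhs) (auto simp: fun_eq_iff)
  qed
  have fy: "((\<lambda>y. f x y) has_derivative blinfun_apply (blinfun_mult_left (G (y, x)))) (at y within Y)"
    if x: "x \<in> X" and y: "y \<in> Y" for x y
  proof -
    have "((\<lambda>u. integral {a..u} (\<lambda>s. G (s, x))) has_real_derivative G (y, x)) (at y within {a..b})"
      by (rule integral_has_real_derivative[OF contGs]) (use x XC y Y_def in auto)
    then have "((\<lambda>u. integral {a..u} (\<lambda>s. G (s, x))) has_real_derivative G (y, x)) (at y within Y)"
      by (rule DERIV_subset) (auto simp: Y_def)
    then show ?thesis unfolding f_def has_field_derivative_def
      by (rule has_derivative_eq_rhs) (auto simp: fun_eq_iff)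
  qed
  have fy_cont: "continuous (at (c, t) within X \<times> Y) (\<lambda>(x, y). blinfun_mult_left (G (y, x)))"
  proof -
    have tc: "(t, c) \<in> S0" using box t c by auto
    have "isCont G (t, c)" using dG tc by (auto intro: has_derivative_continuous)
    moreover have sw: "isCont (\<lambda>z::real\<times>real. (snd z, fst z)) (c, t)" by (intro continuous_intros)
    ultimately have "isCont (\<lambda>z. G (snd z, fst z)) (c, t)" using isCont_o2[OF sw, of G] by simp
    then have "isCont (\<lambda>z. blinfun_mult_left (G (snd z, fst z))) (c, t)"
      by (rule isCont_o2) (rule linear_continuous_at[OF bounded_linear_blinfun_mult_left])
    then have "isCont (\<lambda>(x, y). blinfun_mult_left (G (y, x))) (c, t)"
      unfolding case_prod_unfold by simp
    then show ?thesis by (rule continuous_at_imp_continuous_within)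
  qed
  have "((\<lambda>(x, y). f x y) has_derivative (\<lambda>(tx, ty). tx * I2 + blinfun_mult_left (G (t, c)) ty))
      (at (c, t) within X \<times> Y)"
    by (rule has_derivative_partialsI[OF fx fy fy_cont]) (use t Y_def in auto)
  moreover have "at (c, t) within X \<times> Y = at (c, t)"
    by (rule at_within_open) (use e t X_def Y_def in \<open>auto intro: open_Times\<close>)
  ultimately have D: "((\<lambda>(x, y). f x y) has_derivative
      (\<lambda>(tx, ty). tx * I2 + blinfun_mult_left (G (t, c)) ty)) (at (c, t))" by simp
  have sw: "((\<lambda>z. (snd z, fst z)) has_derivative (\<lambda>z. (snd z, fst z))) (at (t, c))"
    by (intro has_derivative_Pair has_derivative_fst has_derivative_snd has_derivative_ident)
  from has_derivative_compose[OF sw, of "\<lambda>(x, y). f x y", simplified, OF D]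
  show ?thesis unfolding f_def I2_def
    by (rule has_derivative_eq_rhs) (auto simp: fun_eq_iff)
qed

lemma param_int_Ck2:
  fixes G :: "real \<times> real \<Rightarrow> real"
  assumes S0: "open S0" and box: "{a..b} \<times> C \<subseteq> S0" and C: "open C"
  shows "Ck2 (Suc (Suc k)) S0 G \<Longrightarrow>
    Ck2 (Suc k) ({a<..<b} \<times> C) (\<lambda>z. integral {a..fst z} (\<lambda>s. G (s, snd z)))"
proof (induction k arbitrary: G)
  case 0
  from "0" obtain G1 G2 where
    dG: "\<forall>p\<in>S0. (G has_derivative (\<lambda>(x, y). x * G1 p + y * G2 p)) (at p)"
    and c1: "Ck2 (Suc 0) S0 G1" and c2: "Ck2 (Suc 0) S0 G2" by auto
  from c2 obtain G21 G22 where
    dG2: "\<forall>p\<in>S0. (G2 has_derivative (\<lambda>(x, y). x * G21 p + y * G22 p)) (at p)"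
    and c22: "Ck2 0 S0 G22" by auto
  have cG2: "continuous_on S0 G2" using Ck2_mono[OF c2] by simp
  have d: "((\<lambda>z. integral {a..fst z} (\<lambda>s. G (s, snd z))) has_derivative
          (\<lambda>(x, y). x * G p + y * integral {a..fst p} (\<lambda>s. G2 (s, snd p)))) (at p)"
    if p: "p \<in> {a<..<b} \<times> C" for p
    using param_int_hasderiv[OF S0 box C dG cG2, of "fst p" "snd p"] p by auto
  have d2: "((\<lambda>z. integral {a..fst z} (\<lambda>s. G2 (s, snd z))) has_derivative
          (\<lambda>(x, y). x * G2 p + y * integral {a..fst p} (\<lambda>s. G22 (s, snd p)))) (at p)"
    if p: "p \<in> {a<..<b} \<times> C" for p
    using param_int_hasderiv[OF S0 box C dG2, of "fst p" "snd p"] p c22 by auto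
  have "continuous_on ({a<..<b} \<times> C) (\<lambda>z. integral {a..fst z} (\<lambda>s. G2 (s, snd z)))"
    using d2 by (auto intro!: continuous_at_imp_continuous_on has_derivative_continuous)
  then have e2: "Ck2 0 ({a<..<b} \<times> C) (\<lambda>z. integral {a..fst z} (\<lambda>s. G2 (s, snd z)))" by simp
  have e1: "Ck2 0 ({a<..<b} \<times> C) G"
    by (rule Ck2_subset[OF _ Ck2_le[OF _ "0"]]) (use box in auto)
  show ?case
    by (rule Ck2_SucI[OF d e1 e2])
next
  case (Suc k)
  from Suc.prems have "\<exists>G1 G2. (\<forall>p\<in>S0. (G has_derivative (\<lambda>(x, y). x * G1 p + y * G2 p)) (at p))
     \<and> Ck2 (Suc (Suc k)) S0 G1 \<and> Ck2 (Suc (Suc k)) S0 G2" by (simp only: Ck2.simps(2))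
  then obtain G1 G2 where
    dG: "\<forall>p\<in>S0. (G has_derivative (\<lambda>(x, y). x * G1 p + y * G2 p)) (at p)"
    and c2: "Ck2 (Suc (Suc k)) S0 G2" by blast
  have cG2: "continuous_on S0 G2" using Ck2_le[OF _ c2, of 0] by simp
  have d: "((\<lambda>z. integral {a..fst z} (\<lambda>s. G (s, snd z))) has_derivative
          (\<lambda>(x, y). x * G p + y * integral {a..fst p} (\<lambda>s. G2 (s, snd p)))) (at p)"
    if p: "p \<in> {a<..<b} \<times> C" for p
    using param_int_hasderiv[OF S0 box C dG cG2, of "fst p" "snd p"] p by auto
  have e1: "Ck2 (Suc k) ({a<..<b} \<times> C) G"
    by (rule Ck2_subset[OF _ Ck2_le[OF _ Suc.prems]]) (use box in auto)
  show ?case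
    by (rule Ck2_SucI[OF d e1 Suc.IH[OF c2]])
qed

lemma param_int_smooth2:
  fixes G :: "real \<times> real \<Rightarrow> real"
  assumes S0: "open S0" and box: "{a..b} \<times> C \<subseteq> S0" and C: "open C" and G: "smooth2 S0 G"
  shows "smooth2 ({a<..<b} \<times> C) (\<lambda>z. integral {a..fst z} (\<lambda>s. G (s, snd z)))"
  unfolding smooth2_def
proof
  fix k
  have "Ck2 (Suc k) ({a<..<b} \<times> C) (\<lambda>z. integral {a..fst z} (\<lambda>s. G (s, snd z)))"
    using param_int_Ck2[OF S0 box C] G unfolding smooth2_def by blast
  then show "Ck2 k ({a<..<b} \<times> C) (\<lambda>z. integral {a..fst z} (\<lambda>s. G (s, snd z)))"
    by (rule Ck2_mono)
qed

lemma param_int_slice: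
  fixes G :: "real \<times> real \<Rightarrow> real"
  assumes box: "{a..b} \<times> C \<subseteq> S0" and G: "continuous_on S0 G"
    and t: "a < t" "t < b" and c: "c \<in> C"
  shows "((\<lambda>s. integral {a..s} (\<lambda>s. G (s, c))) has_real_derivative G (t, c)) (at t)"
proof -
  have contGs: "continuous_on {a..b} (\<lambda>s. G (s, c))"
    by (rule continuous_on_compose2[OF G]) (use box c in \<open>auto intro: continuous_intros\<close>)
  have "((\<lambda>u. integral {a..u} (\<lambda>s. G (s, c))) has_real_derivative G (t, c)) (at t within {a..b})"
    by (rule integral_has_real_derivative[OF contGs]) (use t in auto)
  moreover have "at t within {a..b} = at t"
    by (rule at_within_interior) (use t in auto)
  ultimately show ?thesis by simp
qed



lemma smooth1_Ck2_any: "smooth1 V \<phi> \<Longrightarrow> (\<And>z. z \<in> S \<Longrightarrow> fst z \<in> V) \<Longrightarrow> Ck2 k S (\<lambda>z. \<phi> (fst z))"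
  using Ck2_sm1[OF _ Ck2_fst] by blast

lemma smooth1_Ck2_snd: "smooth1 V \<phi> \<Longrightarrow> (\<And>z. z \<in> S \<Longrightarrow> snd z \<in> V) \<Longrightarrow> Ck2 k S (\<lambda>z. \<phi> (snd z))"
  using Ck2_sm1[OF _ Ck2_snd] by blast

lemma smooth1_from_Ck2: "open V \<Longrightarrow> (\<And>k. Ck2 k (V \<times> UNIV) (\<lambda>z. \<phi> (fst z))) \<Longrightarrow> smooth1 V \<phi>"
  using Ck2_smooth1 by blast

lemma smooth1_id: "open V \<Longrightarrow> smooth1 V (\<lambda>t. t)"
  by (rule smooth1_from_Ck2) (simp_all add: Ck2_fst)

lemma smooth1_const: "open V \<Longrightarrow> smooth1 V (\<lambda>t. c)"
  by (rule smooth1_from_Ck2) (simp_all add: Ck2_const)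

lemma smooth1_subset: "smooth1 V f \<Longrightarrow> W \<subseteq> V \<Longrightarrow> smooth1 W f"
  unfolding smooth1_def by blast

lemma antideriv:
  fixes f :: "real \<Rightarrow> real"
  assumes V: "open V" and f: "smooth1 V f" and ab: "{a..b} \<subseteq> V"
  shows "smooth1 {a<..<b} (\<lambda>t. integral {a..t} f)"
    and "\<And>t. t \<in> {a<..<b} \<Longrightarrow> ((\<lambda>t. integral {a..t} f) has_real_derivative f t) (at t)"
proof -
  have S0: "open (V \<times> (UNIV :: real set))" using V by (simp add: open_Times)
  have box: "{a..b} \<times> (UNIV :: real set) \<subseteq> V \<times> UNIV" using ab by auto
  have G: "smooth2 (V \<times> UNIV) (\<lambda>z. f (fst z))"
    unfolding smooth2_def using smooth1_Ck2[OF f] by blast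
  have "smooth2 ({a<..<b} \<times> UNIV) (\<lambda>z. integral {a..fst z} (\<lambda>s. f (fst (s, snd z))))"
    by (rule param_int_smooth2[OF S0 box open_UNIV G])
  then show "smooth1 {a<..<b} (\<lambda>t. integral {a..t} f)"
    unfolding smooth2_def by (intro smooth1_from_Ck2) auto
  fix t assume t: "t \<in> {a<..<b}"
  have "Ck2 0 (V \<times> UNIV) (\<lambda>z. f (fst z))" using G unfolding smooth2_def by blast
  then have "continuous_on (V \<times> (UNIV :: real set)) (\<lambda>z. f (fst z))" by simp
  from param_int_slice[OF box this, of t 0] t
  show "((\<lambda>t. integral {a..t} f) has_real_derivative f t) (at t)" by simp
qed

lemma inj_from_deriv:
  fixes B :: "real \<Rightarrow> real"
  assumes J: "is_interval J" and B: "smooth1 J B" and nz: "\<forall>x\<in>J. deriv B x \<noteq> 0"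
  shows "inj_on B J"
proof -
  have aux: False if xy: "x \<in> J" "y \<in> J" "x < y" "B x = B y" for x y
  proof -
    have H: "\<forall>a\<in>J. \<forall>b\<in>J. \<forall>x. a \<le> x \<and> x \<le> b \<longrightarrow> x \<in> J" using J by (simp only: is_interval_1)
    have sub: "{x..y} \<subseteq> J"
    proof
      fix z assume z: "z \<in> {x..y}"
      show "z \<in> J" using H[rule_format, OF xy(1,2), of z] z by simp
    qed
    have c: "continuous_on {x..y} B" using smooth1_cont[OF B] sub by (rule continuous_on_subset)
    have d: "B differentiable (at z)" if "x < z" "z < y" for z
    proof -
      have z: "z \<in> J" using sub that by auto
      show "B differentiable (at z)" unfolding real_differentiable_def
        by (rule exI[of _ "deriv B z"]) (rule smooth1_D[OF B z])
    qed
    have "\<exists>z. x < z \<and> z < y \<and> DERIV B z :> 0"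
      by (rule Rolle[OF xy(3) xy(4) c d])
    then obtain z where z: "x < z" "z < y" "DERIV B z :> 0" by blast
    have "deriv B z = 0" using DERIV_imp_deriv[OF z(3)] .
    moreover have "z \<in> J" using sub z by auto
    ultimately show False using nz by auto
  qed
  show ?thesis
  proof (rule inj_onI)
    fix x y assume xJ: "x \<in> J" and yJ: "y \<in> J" and Bxy: "B x = B y"
    show "x = y"
    proof (rule ccontr)
      assume neq: "x \<noteq> y"
      show False
      proof (cases "x < y")
        case True
        show ?thesis by (rule aux[OF xJ yJ True Bxy])
      next
        case False
        then have yx: "y < x" using neq by auto
        show ?thesis by (rule aux[OF yJ xJ yx Bxy[symmetric]])
      qed
    qed
  qed
qed

lemma inverse_smooth:
  fixes B :: "real \<Rightarrow> real"
  assumes Jo: "open J" and J: "is_interval J" and B: "smooth1 J B" and nz: "\<forall>x\<in>J. deriv B x \<noteq> 0"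
  shows "open (B ` J)" and "\<And>x. x \<in> J \<Longrightarrow> inv_into J B (B x) = x"
    and "\<And>y. y \<in> B ` J \<Longrightarrow> inv_into J B y \<in> J \<and> B (inv_into J B y) = y"
    and "smooth1 (B ` J) (inv_into J B)"
proof -
  have inj: "inj_on B J" by (rule inj_from_deriv[OF J B nz])
  have cB: "continuous_on J B" by (rule smooth1_cont[OF B])
  show W: "open (B ` J)" by (rule invariance_of_domain[OF cB Jo inj])
  show gB: "\<And>x. x \<in> J \<Longrightarrow> inv_into J B (B x) = x" using inj by simp
  show gJ: "\<And>y. y \<in> B ` J \<Longrightarrow> inv_into J B y \<in> J \<and> B (inv_into J B y) = y"
    by (auto simp: inv_into_into f_inv_into_f)
  define g where "g = inv_into J B"
  have dg: "(g has_real_derivative inverse (deriv B (g y))) (at y)" if y: "y \<in> B ` J" for y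
  proof -
    obtain x where x: "x \<in> J" "y = B x" using y by auto
    have gx: "g y = x" using gB x g_def by simp
    have dB: "(B has_derivative (*) (deriv B x)) (at x)"
      using smooth1_D[OF B x(1)] unfolding has_field_derivative_def .
    have gBx: "\<And>x. x \<in> J \<Longrightarrow> g (B x) = x" using gB g_def by simp
    have idd: "(*) (deriv B x) \<circ> (*) (inverse (deriv B x)) = id"
      using nz x by (simp add: fun_eq_iff)
    have "(g has_derivative (*) (inverse (deriv B x))) (at (B x))"
      by (rule has_derivative_inverse_strong[OF Jo x(1) cB gBx dB idd])
    then show ?thesis unfolding has_field_derivative_def using x gx by simp
  qed
  have Ck: "Ck2 k (B ` J \<times> UNIV) (\<lambda>z. g (fst z))" for k
  proof (induction k)
    case 0
    have "continuous_on (B ` J \<times> UNIV) (\<lambda>z. g (fst z))"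
    proof (rule continuous_on_compose2[of "B ` J" g])
      show "continuous_on (B ` J) g"
      proof (rule continuous_at_imp_continuous_on, rule ballI)
        fix y assume "y \<in> B ` J"
        from dg[OF this] show "isCont g y" by (rule DERIV_isCont)
      qed
    qed (auto intro: continuous_intros)
    then show ?case by simp
  next
    case (Suc k)
    have d: "((\<lambda>z. g (fst z)) has_derivative (\<lambda>(a, b). a * inverse (deriv B (g (fst z))) + b * 0)) (at z)"
      if z: "z \<in> B ` J \<times> UNIV" for z
    proof -
      have "(g has_derivative (*) (inverse (deriv B (g (fst z))))) (at (fst z))"
        using dg[of "fst z"] z unfolding has_field_derivative_def by auto
      from has_derivative_compose[OF has_derivative_fst[OF has_derivative_ident] this]
      show ?thesis by (rule has_derivative_eq_rhs) (auto simp: fun_eq_iff)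
    qed
    have e1: "Ck2 k (B ` J \<times> UNIV) (\<lambda>z. inverse (deriv B (g (fst z))))"
    proof (rule Ck2_inverse)
      show "Ck2 k (B ` J \<times> UNIV) (\<lambda>z. deriv B (g (fst z)))"
        by (rule Ck2_sm1[OF smooth1_deriv[OF B] Suc.IH]) (use gJ g_def in auto)
      show "\<And>z. z \<in> B ` J \<times> UNIV \<Longrightarrow> deriv B (g (fst z)) \<noteq> 0"
        using gJ nz g_def by auto
    qed
    show ?case by (rule Ck2_SucI[OF d e1 Ck2_const])
  qed
  have "smooth1 (B ` J) g" by (rule smooth1_from_Ck2[OF W Ck])
  then show "smooth1 (B ` J) (inv_into J B)" unfolding g_def .
qed

lemma nonzero_ball:
  fixes f :: "real \<Rightarrow> real"
  assumes "open S" "continuous_on S f" "x \<in> S" "f x \<noteq> 0"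
  shows "\<exists>e>0. ball x e \<subseteq> S \<and> (\<forall>y\<in>ball x e. f y \<noteq> 0)"
proof -
  have "open (S \<inter> f -` (-{0}))" by (rule continuous_open_preimage[OF assms(2,1)]) auto
  moreover have "x \<in> S \<inter> f -` (-{0})" using assms by auto
  ultimately obtain e where "e > 0" "ball x e \<subseteq> S \<inter> f -` (-{0})"
    using open_contains_ball by blast
  then show ?thesis by auto
qed

lemma push_first:
  fixes T X U T' X' U' :: "real \<Rightarrow> real" and Y Ya Yb :: "real \<times> real \<Rightarrow> real"
    and P :: "R3 \<Rightarrow> R3"
  assumes dT: "\<And>t. t \<in> I \<Longrightarrow> (T has_real_derivative T' t) (at t)"
    and dX: "\<And>x. x \<in> J \<Longrightarrow> (X has_real_derivative X' x) (at x)"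
    and dU: "\<And>t. t \<in> I \<Longrightarrow> (U has_real_derivative U' t) (at t)"
    and dY: "\<And>t x. t \<in> I \<Longrightarrow> x \<in> J \<Longrightarrow>
              (Y has_derivative (\<lambda>(a, b). a * Ya (t, x) + b * Yb (t, x))) (at (t, x))"
    and eq: "\<And>t x u. t \<in> I \<Longrightarrow> x \<in> J \<Longrightarrow>
       P (T t, X x, U t * u + Y (t, x)) =
       (T' t * \<tau> t, X' x * \<xi> x,
        U' t * \<tau> t * u + U t * (h t * u + r (t, x)) + Ya (t, x) * \<tau> t + Yb (t, x) * \<xi> x)"
  shows "pushes_to (\<lambda>(t, x, u). (T t, X x, U t * u + Y (t, x))) (I \<times> J \<times> UNIV) (Qfield \<tau> \<xi> h r) P"
  unfolding pushes_to_def
proof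
  fix p :: R3 assume p: "p \<in> I \<times> J \<times> UNIV"
  obtain t x u where ptxu: "p = (t, x, u)" and t: "t \<in> I" and x: "x \<in> J" using p by auto
  have phi: "(\<lambda>(t, x, u). (T t, X x, U t * u + Y (t, x))) =
      (\<lambda>q::R3. (T (fst q), X (fst (snd q)), U (fst q) * snd (snd q) + Y (fst q, fst (snd q))))"
    by (auto simp: fun_eq_iff)
  have h1: "((\<lambda>q::R3. T (fst q)) has_derivative (\<lambda>v. T' t * fst v)) (at p)"
    using has_derivative_compose[OF has_derivative_fst[OF has_derivative_ident],
        of T "(*) (T' t)" p UNIV] dT[OF t] ptxu
    unfolding has_field_derivative_def by simp
  have h2: "((\<lambda>q::R3. X (fst (snd q))) has_derivative (\<lambda>v. X' x * fst (snd v))) (at p)"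
    using has_derivative_compose[OF has_derivative_fst[OF has_derivative_snd[OF has_derivative_ident]],
        of X "(*) (X' x)" p UNIV] dX[OF x] ptxu
    unfolding has_field_derivative_def by simp
  have h3: "((\<lambda>q::R3. U (fst q)) has_derivative (\<lambda>v. U' t * fst v)) (at p)"
    using has_derivative_compose[OF has_derivative_fst[OF has_derivative_ident],
        of U "(*) (U' t)" p UNIV] dU[OF t] ptxu
    unfolding has_field_derivative_def by simp
  have h4: "((\<lambda>q::R3. (fst q, fst (snd q))) has_derivative (\<lambda>v. (fst v, fst (snd v)))) (at p)"
    by (rule has_derivative_Pair[OF has_derivative_fst[OF has_derivative_ident]
          has_derivative_fst[OF has_derivative_snd[OF has_derivative_ident]]])
  have dYp: "(Y has_derivative (\<lambda>(a, b). a * Ya (t, x) + b * Yb (t, x)))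
      (at ((\<lambda>q::R3. (fst q, fst (snd q))) p))" using dY[OF t x] ptxu by simp
  have h5: "((\<lambda>q::R3. Y (fst q, fst (snd q))) has_derivative
      (\<lambda>v. fst v * Ya (t, x) + fst (snd v) * Yb (t, x))) (at p)"
    using has_derivative_compose[OF h4 dYp] by (rule has_derivative_eq_rhs) (auto simp: fun_eq_iff)
  have h6: "((\<lambda>q::R3. snd (snd q)) has_derivative (\<lambda>v. snd (snd v))) (at p)"
    by (rule has_derivative_snd[OF has_derivative_snd[OF has_derivative_ident]])
  have h7: "((\<lambda>q::R3. U (fst q) * snd (snd q) + Y (fst q, fst (snd q))) has_derivative
      (\<lambda>v. U t * snd (snd v) + U' t * fst v * u + (fst v * Ya (t, x) + fst (snd v) * Yb (t, x)))) (at p)"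
    using has_derivative_add[OF has_derivative_mult[OF h3 h6] h5] ptxu by simp
  have D: "((\<lambda>(t, x, u). (T t, X x, U t * u + Y (t, x))) has_derivative
     (\<lambda>v. (T' t * fst v, X' x * fst (snd v),
        U t * snd (snd v) + U' t * fst v * u + (fst v * Ya (t, x) + fst (snd v) * Yb (t, x))))) (at p)"
    unfolding phi by (rule has_derivative_Pair[OF h1 has_derivative_Pair[OF h2 h7]])
  show "\<exists>D. ((\<lambda>(t, x, u). (T t, X x, U t * u + Y (t, x))) has_derivative D) (at p) \<and>
         D (Qfield \<tau> \<xi> h r p) = P ((\<lambda>(t, x, u). (T t, X x, U t * u + Y (t, x))) p)"
  proof (rule exI, rule conjI[OF D])
    have e: "P (T t, X x, U t * u + Y (t, x)) = (T' t * \<tau> t, X' x * \<xi> x,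
        U' t * \<tau> t * u + U t * (h t * u + r (t, x)) + Ya (t, x) * \<tau> t + Yb (t, x) * \<xi> x)"
      by (rule eq[OF t x])
    have "(\<lambda>v. (T' t * fst v, X' x * fst (snd v),
               U t * snd (snd v) + U' t * fst v * u +
               (fst v * Ya (t, x) + fst (snd v) * Yb (t, x)))) (Qfield \<tau> \<xi> h r p) =
       (T' t * \<tau> t, X' x * \<xi> x,
        U' t * \<tau> t * u + U t * (h t * u + r (t, x)) + Ya (t, x) * \<tau> t + Yb (t, x) * \<xi> x)"
      by (simp add: ptxu Qfield_def algebra_simps)
    also have "\<dots> = P ((\<lambda>(t, x, u). (T t, X x, U t * u + Y (t, x))) p)"
      using e by (simp add: ptxu)
    finally show "(\<lambda>v. (T' t * fst v, X' x * fst (snd v),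
               U t * snd (snd v) + U' t * fst v * u +
               (fst v * Ya (t, x) + fst (snd v) * Yb (t, x)))) (Qfield \<tau> \<xi> h r p) =
       P ((\<lambda>(t, x, u). (T t, X x, U t * u + Y (t, x))) p)" .
  qed
qed

definition good :: "real set \<Rightarrow> real set \<Rightarrow> (real \<Rightarrow> real) \<Rightarrow> (real \<Rightarrow> real) \<Rightarrow> (real \<Rightarrow> real)
   \<Rightarrow> (real \<times> real \<Rightarrow> real) \<Rightarrow> (real \<times> real \<Rightarrow> real) \<Rightarrow> bool" where
  "good I0 J0 \<tau> \<xi> h r g \<longleftrightarrow> (\<exists>I J \<phi>. open I \<and> open J \<and> I \<noteq> {} \<and> J \<noteq> {} \<and> I \<subseteq> I0 \<and> J \<subseteq> J0
           \<and> is_interval I \<and> is_interval J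
           \<and> (cv_first I J \<phi> \<or> cv_second g I J \<phi>)
           \<and> (\<exists>c. c \<noteq> 0 \<and>
                ((\<exists>P\<in>canonical_list.
                    pushes_to \<phi> (I \<times> J \<times> UNIV) (Qfield \<tau> \<xi> h r) (\<lambda>q. c *\<^sub>R P q))
                 \<or> (\<exists>s :: real \<times> real \<Rightarrow> real.
                      (\<exists>q\<in>\<phi> ` (I \<times> J \<times> UNIV). s (fst q, fst (snd q)) \<noteq> 0)
                      \<and> pushes_to \<phi> (I \<times> J \<times> UNIV) (Qfield \<tau> \<xi> h r)
                           (\<lambda>(t, x, u). c *\<^sub>R (0, 0, s (t, x)))))))"

lemma goodI:
  fixes T X U :: "real \<Rightarrow> real" and Y :: "real \<times> real \<Rightarrow> real"
  assumes "open I" "open J" "I \<noteq> {}" "J \<noteq> {}" "I \<subseteq> I0" "J \<subseteq> J0" "is_interval I" "is_interval J"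
    and "smooth1 I T" "smooth1 J X" "smooth1 I U" "smooth2 (I \<times> J) Y"
    and "\<forall>t\<in>I. deriv T t \<noteq> 0 \<and> U t \<noteq> 0" "\<forall>x\<in>J. deriv X x \<noteq> 0"
    and "c \<noteq> 0"
    and "(\<exists>P\<in>canonical_list. pushes_to (\<lambda>(t, x, u). (T t, X x, U t * u + Y (t, x)))
            (I \<times> J \<times> UNIV) (Qfield \<tau> \<xi> h r) (\<lambda>q. c *\<^sub>R P q))
        \<or> (\<exists>s :: real \<times> real \<Rightarrow> real.
             (\<exists>q\<in>(\<lambda>(t, x, u). (T t, X x, U t * u + Y (t, x))) ` (I \<times> J \<times> UNIV). s (fst q, fst (snd q)) \<noteq> 0)
             \<and> pushes_to (\<lambda>(t, x, u). (T t, X x, U t * u + Y (t, x))) (I \<times> J \<times> UNIV) (Qfield \<tau> \<xi> h r)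
                  (\<lambda>(t, x, u). c *\<^sub>R (0, 0, s (t, x))))"
  shows "good I0 J0 \<tau> \<xi> h r g"
proof -
  have cv: "cv_first I J (\<lambda>(t, x, u). (T t, X x, U t * u + Y (t, x)))"
    unfolding cv_first_def
    by (rule exI[of _ T], rule exI[of _ X], rule exI[of _ U], rule exI[of _ Y]) (use assms(9-14) in simp)
  show ?thesis unfolding good_def
    apply (rule exI[of _ I], rule exI[of _ J], rule exI[of _ "\<lambda>(t, x, u). (T t, X x, U t * u + Y (t, x))"])
    apply (intro conjI)
             apply (fact assms(1))
            apply (fact assms(2))
           apply (fact assms(3))
          apply (fact assms(4))
         apply (fact assms(5))
        apply (fact assms(6))
       apply (fact assms(7))
      apply (fact assms(8))
     apply (rule disjI1[OF cv])
    apply (rule exI[of _ c], rule conjI[OF assms(15) assms(16)])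
    done
qed



lemma smooth1_mult: "open V \<Longrightarrow> smooth1 V f \<Longrightarrow> smooth1 V g \<Longrightarrow> smooth1 V (\<lambda>x. f x * g x)"
  by (rule smooth1_from_Ck2) (auto intro: Ck2_mult[OF smooth1_Ck2 smooth1_Ck2])

lemma smooth1_inverse: "open V \<Longrightarrow> smooth1 V f \<Longrightarrow> (\<And>x. x \<in> V \<Longrightarrow> f x \<noteq> 0) \<Longrightarrow>
    smooth1 V (\<lambda>x. inverse (f x))"
  by (rule smooth1_from_Ck2) (auto intro!: Ck2_inverse[OF smooth1_Ck2])

lemma smooth1_exp_comp: "open V \<Longrightarrow> smooth1 V f \<Longrightarrow> smooth1 V (\<lambda>x. exp (f x))"
  by (rule smooth1_from_Ck2) (auto intro!: Ck2_exp[OF smooth1_Ck2])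

lemma smooth1_uminus: "open V \<Longrightarrow> smooth1 V f \<Longrightarrow> smooth1 V (\<lambda>x. - f x)"
  by (rule smooth1_from_Ck2) (auto intro!: Ck2_uminus[OF smooth1_Ck2])

lemma smooth1_cmult: "open V \<Longrightarrow> smooth1 V f \<Longrightarrow> smooth1 V (\<lambda>x. c * f x)"
  using smooth1_mult[OF _ smooth1_const] by blast

lemma deriv_id_ne: "deriv (\<lambda>t. t) t \<noteq> 0"
  using DERIV_imp_deriv[OF DERIV_ident] by simp

lemma smooth2_const: "smooth2 S (\<lambda>_. c)"
  unfolding smooth2_def by (simp add: Ck2_const)

lemma deriv_split:
  fixes h :: "real \<Rightarrow> real"
  assumes oI0: "open I0" and sh: "smooth1 I0 h" and sub: "ball t e \<subseteq> I0" and e: "e > 0"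
  shows "(\<exists>t2 e3. e3 > 0 \<and> ball t2 e3 \<subseteq> ball t e \<and> (\<forall>s\<in>ball t2 e3. deriv h s \<noteq> 0))
         \<or> (\<forall>s\<in>ball t e. h s = h t)"
proof (cases "\<exists>t2\<in>ball t e. deriv h t2 \<noteq> 0")
  case True
  then obtain t2 where t2: "t2 \<in> ball t e" "deriv h t2 \<noteq> 0" by blast
  have "continuous_on (ball t e) (deriv h)"
    using smooth1_cont[OF smooth1_deriv[OF smooth1_subset[OF sh sub]]] .
  from nonzero_ball[OF open_ball this t2] show ?thesis by blast
next
  case False
  have "\<exists>c. \<forall>x\<in>ball t e. h x = c"
  proof (rule has_field_derivative_zero_constant)
    fix x assume x: "x \<in> ball t e"
    have "(h has_real_derivative deriv h x) (at x)" using smooth1_D[OF sh] x sub by auto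
    moreover have "deriv h x = 0" using False x by auto
    ultimately show "(h has_real_derivative 0) (at x within ball t e)"
      by (auto intro: has_field_derivative_at_within)
  qed simp
  then obtain c where "\<forall>x\<in>ball t e. h x = c" by blast
  moreover have "t \<in> ball t e" using e by simp
  ultimately show ?thesis by auto
qed

text \<open>Case r(t,x) d_u.\<close>

lemma coreD2:
  assumes sub: "I \<subseteq> I0" "J \<subseteq> J0" and oI: "open I" "is_interval I" and oJ: "open J" "is_interval J"
    and t0: "t0 \<in> I" and x0: "x0 \<in> J"
    and z: "\<forall>t\<in>I. \<tau> t = 0 \<and> h t = 0" "\<forall>x\<in>J. \<xi> x = 0" and r0: "r (t0, x0) \<noteq> 0"
  shows "good I0 J0 \<tau> \<xi> h r g"
proof (rule goodI[where T="\<lambda>t. t" and X="\<lambda>t. t" and U="\<lambda>_. 1" and Y="\<lambda>_. 0" and c=1])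
  show "I \<noteq> {}" "J \<noteq> {}" using t0 x0 by auto
  show "smooth1 I (\<lambda>t. t)" "smooth1 J (\<lambda>t. t)" "smooth1 I (\<lambda>_. 1)"
    using oI oJ by (auto intro: smooth1_id smooth1_const)
  show "smooth2 (I \<times> J) (\<lambda>_. 0)" by (rule smooth2_const)
  show "\<forall>t\<in>I. deriv (\<lambda>t. t) t \<noteq> 0 \<and> (1::real) \<noteq> 0" "\<forall>x\<in>J. deriv (\<lambda>t. t) x \<noteq> 0"
    using deriv_id_ne by auto
  have push: "pushes_to (\<lambda>(t, x, u). (t, x, 1 * u + 0)) (I \<times> J \<times> UNIV) (Qfield \<tau> \<xi> h r)
      (\<lambda>(t, x, u). (1::real) *\<^sub>R (0, 0, r (t, x)))"
  proof (rule push_first[where T'="\<lambda>_. 1" and X'="\<lambda>_. 1" and U'="\<lambda>_. 0"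
        and Ya="\<lambda>_. 0" and Yb="\<lambda>_. 0"])
    show "((\<lambda>_. 0) has_derivative (\<lambda>(a, b). a * (\<lambda>_. 0) (t, x) + b * (\<lambda>_. 0) (t, x))) (at (t, x))"
      for t x :: real by (rule has_derivative_eq_rhs[OF has_derivative_const]) (auto simp: fun_eq_iff)
  qed (use z in \<open>auto intro: DERIV_ident DERIV_const\<close>)
  show "(\<exists>P\<in>canonical_list. pushes_to (\<lambda>(t, x, u). (t, x, 1 * u + 0)) (I \<times> J \<times> (UNIV::real set)) (Qfield \<tau> \<xi> h r) (\<lambda>q. 1 *\<^sub>R P q))
        \<or> (\<exists>s. (\<exists>q\<in>(\<lambda>(t, x, u). (t, x, 1 * u + 0)) ` (I \<times> J \<times> (UNIV::real set)). s (fst q, fst (snd q)) \<noteq> 0)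
             \<and> pushes_to (\<lambda>(t, x, u). (t, x, 1 * u + 0)) (I \<times> J \<times> (UNIV::real set)) (Qfield \<tau> \<xi> h r)
                  (\<lambda>(t, x, u). 1 *\<^sub>R (0, 0, s (t, x))))"
  proof (rule disjI2, rule exI[of _ r], rule conjI[OF _ push])
    have mem: "(t0, x0, 0::real) \<in> I \<times> J \<times> UNIV" using t0 x0 by auto
    have eq: "(\<lambda>(t, x, u). (t, x, 1 * u + 0)) (t0, x0, 0) = (t0, x0, 0::real)" by simp
    have im: "(t0, x0, 0::real) \<in> (\<lambda>(t, x, u). (t, x, 1 * u + 0)) ` (I \<times> J \<times> (UNIV::real set))"
      by (rule image_eqI[where x="(t0, x0, 0)"]) (simp_all only: eq mem)
    show "\<exists>q\<in>(\<lambda>(t, x, u). (t, x, 1 * u + 0)) ` (I \<times> J \<times> (UNIV::real set)). r (fst q, fst (snd q)) \<noteq> 0"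
      apply (rule bexI[where x="(t0, x0, 0::real)"])
       apply (simp add: r0)
      apply (rule image_eqI[where x="(t0, x0, 0::real)"])
       apply (simp_all add: t0 x0)
      done
  qed
qed (use sub oI oJ in auto)



lemma smooth2_Ck2: "smooth2 S f \<Longrightarrow> Ck2 k S f"
  unfolding smooth2_def by blast

lemma smooth2_sub: "smooth2 S f \<Longrightarrow> S' \<subseteq> S \<Longrightarrow> Ck2 k S' f"
  by (rule Ck2_subset[OF _ smooth2_Ck2])

lemma ball_sub_I: "e > 0 \<Longrightarrow> {x - 3 * e / 4 .. x + 3 * e / 4} \<subseteq> ball (x::real) e"
  by (auto simp: ball_eq_greaterThanLessThan)

lemma ball_sub_I2: "e > 0 \<Longrightarrow> {x - e / 2 .. x + e / 2} \<subseteq> {(x::real) - 3 * e / 4 <..< x + 3 * e / 4}"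
  by auto

lemma Ioo_sub_ball: "e > 0 \<Longrightarrow> {x - 3 * e / 4 <..< x + 3 * e / 4} \<subseteq> ball (x::real) e"
  by (auto simp: ball_eq_greaterThanLessThan)

lemma canon: "(\<lambda>(t, x, u). (1::real, 0::real, 0::real)) \<in> canonical_list"
  by (simp add: canonical_list_def)

lemma Ioo_facts: "a < (b::real) \<Longrightarrow> open {a<..<b} \<and> is_interval {a<..<b} \<and> {a<..<b} \<noteq> {}"
  by (auto simp: is_interval_1)

text \<open>Case (h u + r) d_u with h nonzero.\<close>

lemma coreD1:
  fixes T :: "real \<Rightarrow> real" and P :: "R3 \<Rightarrow> R3"
  assumes sr: "smooth2 (I0 \<times> J0) r" and sh: "smooth1 I0 h"
    and sub: "I \<subseteq> I0" "J \<subseteq> J0" and oI: "open I" "is_interval I" "I \<noteq> {}"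
    and oJ: "open J" "is_interval J" "J \<noteq> {}"
    and z: "\<forall>t\<in>I. \<tau> t = 0 \<and> h t \<noteq> 0" "\<forall>x\<in>J. \<xi> x = 0"
    and T: "smooth1 I T" "\<forall>t\<in>I. deriv T t \<noteq> 0"
    and c: "c \<noteq> 0" and Pm: "P \<in> canonical_list"
    and HP: "\<And>t y v. t \<in> I \<Longrightarrow> c *\<^sub>R P (T t, y, v) = (0, 0, h t * v)"
  shows "good I0 J0 \<tau> \<xi> h r g"
proof -
  define Y where "Y = (\<lambda>z::real\<times>real. r z / h (fst z))"
  have oIJ: "open (I \<times> J)" using oI oJ by (simp add: open_Times)
  have sY: "smooth2 (I \<times> J) Y" unfolding smooth2_def Y_def
  proof
    fix k
    show "Ck2 k (I \<times> J) (\<lambda>z. r z / h (fst z))"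
    proof (rule Ck2_divide)
      show "Ck2 k (I \<times> J) r" by (rule smooth2_sub[OF sr]) (use sub in auto)
      show "Ck2 k (I \<times> J) (\<lambda>z. h (fst z))" by (rule smooth1_Ck2_any[OF sh]) (use sub in auto)
      show "\<And>z. z \<in> I \<times> J \<Longrightarrow> h (fst z) \<noteq> 0" using z by auto
    qed
  qed
  have push: "pushes_to (\<lambda>(t, x, u). (T t, x, 1 * u + Y (t, x))) (I \<times> J \<times> (UNIV::real set))
      (Qfield \<tau> \<xi> h r) (\<lambda>q. c *\<^sub>R P q)"
  proof (rule push_first[where T'="deriv T" and X'="\<lambda>_. 1" and U'="\<lambda>_. 0"
        and Ya="pd_t Y" and Yb="pd_x Y"])
    show "(T has_real_derivative deriv T t) (at t)" if "t \<in> I" for t using smooth1_D[OF T(1) that] .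
    show "((\<lambda>t. t) has_real_derivative (\<lambda>_. 1) x) (at x)" for x by (simp add: DERIV_ident)
    show "((\<lambda>_. 1) has_real_derivative (\<lambda>_. 0) t) (at t)" for t by (simp add: DERIV_const)
    show "(Y has_derivative (\<lambda>(a, b). a * pd_t Y (t, x) + b * pd_x Y (t, x))) (at (t, x))"
      if "t \<in> I" "x \<in> J" for t x
      using smooth2_pd[OF oIJ sY] that by auto
    fix t x u assume t: "t \<in> I" and x: "x \<in> J"
    have ht: "h t \<noteq> 0" and tt: "\<tau> t = 0" and xx: "\<xi> x = 0" using z t x by auto
    show "c *\<^sub>R P (T t, x, 1 * u + Y (t, x)) = (deriv T t * \<tau> t, (\<lambda>_. 1) x * \<xi> x,
        (\<lambda>_. 0) t * \<tau> t * u + 1 * (h t * u + r (t, x)) + pd_t Y (t, x) * \<tau> t + pd_x Y (t, x) * \<xi> x)"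
      using HP[OF t, of x "1 * u + Y (t, x)"] ht tt xx by (simp add: Y_def field_simps)
  qed
  show ?thesis
  proof (rule goodI[where T=T and X="\<lambda>x. x" and U="\<lambda>_. 1" and Y=Y and c=c])
    show "smooth1 J (\<lambda>x. x)" "smooth1 I (\<lambda>_. 1)" using oI oJ by (auto intro: smooth1_id smooth1_const)
    show "\<forall>t\<in>I. deriv T t \<noteq> 0 \<and> (1::real) \<noteq> 0" "\<forall>x\<in>J. deriv (\<lambda>x. x) x \<noteq> 0"
      using T deriv_id_ne by auto
    show "(\<exists>P\<in>canonical_list. pushes_to (\<lambda>(t, x, u). (T t, x, 1 * u + Y (t, x)))
            (I \<times> J \<times> UNIV) (Qfield \<tau> \<xi> h r) (\<lambda>q. c *\<^sub>R P q))
        \<or> (\<exists>s :: real \<times> real \<Rightarrow> real.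
             (\<exists>q\<in>(\<lambda>(t, x, u). (T t, x, 1 * u + Y (t, x))) ` (I \<times> J \<times> (UNIV::real set)). s (fst q, fst (snd q)) \<noteq> 0)
             \<and> pushes_to (\<lambda>(t, x, u). (T t, x, 1 * u + Y (t, x))) (I \<times> J \<times> UNIV) (Qfield \<tau> \<xi> h r)
                  (\<lambda>(t, x, u). c *\<^sub>R (0, 0, s (t, x))))"
      by (rule disjI1, rule bexI[OF _ Pm], rule push)
  qed (use sub oI oJ sY T c in auto)
qed

lemma caseD1:
  assumes sr: "smooth2 (I0 \<times> J0) r" and sh: "smooth1 I0 h" and oI0: "open I0"
    and I1: "ball t1 e1 \<subseteq> I0" "e1 > 0" and J1: "ball x0 e2 \<subseteq> J0" "e2 > 0"
    and z: "\<forall>t\<in>ball t1 e1. \<tau> t = 0 \<and> h t \<noteq> 0" "\<forall>x\<in>ball x0 e2. \<xi> x = 0"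
  shows "good I0 J0 \<tau> \<xi> h r g"
proof -
  have Jf: "open (ball x0 e2)" "is_interval (ball x0 e2)" "ball x0 e2 \<noteq> {}"
    using J1 by (auto simp: is_interval_ball_real)
  from deriv_split[OF oI0 sh I1] show ?thesis
  proof
    assume "\<exists>t2 e3. e3 > 0 \<and> ball t2 e3 \<subseteq> ball t1 e1 \<and> (\<forall>s\<in>ball t2 e3. deriv h s \<noteq> 0)"
    then obtain t2 e3 where e3: "e3 > 0" "ball t2 e3 \<subseteq> ball t1 e1" "\<forall>s\<in>ball t2 e3. deriv h s \<noteq> 0"
      by blast
    show ?thesis
    proof (rule coreD1[OF sr sh, where T=h and c=1 and P="\<lambda>(t, x, u). (0, 0, t * u)"
          and I="ball t2 e3" and J="ball x0 e2"])
      show "smooth1 (ball t2 e3) h" by (rule smooth1_subset[OF sh]) (use e3 I1 in auto)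
      show "(\<lambda>(t, x, u). (0, 0, t * u)) \<in> canonical_list" by (simp add: canonical_list_def)
    qed (use e3 I1 J1 Jf z in \<open>auto simp: is_interval_ball_real\<close>)
  next
    assume hc: "\<forall>s\<in>ball t1 e1. h s = h t1"
    have t1: "t1 \<in> ball t1 e1" using I1 by simp
    have k: "h t1 \<noteq> 0" using z t1 by auto
    show ?thesis
    proof (rule coreD1[OF sr sh, where T="\<lambda>t. t" and c="h t1" and P="\<lambda>(t, x, u). (0, 0, u)"
          and I="ball t1 e1" and J="ball x0 e2"])
      show "smooth1 (ball t1 e1) (\<lambda>t. t)" by (rule smooth1_id) simp
      show "(\<lambda>(t, x, u). (0, 0, u)) \<in> canonical_list" by (simp add: canonical_list_def)
      show "\<And>t y v. t \<in> ball t1 e1 \<Longrightarrow> h t1 *\<^sub>R (case (t, y, v) of (t, x, u) \<Rightarrow> (0, 0, u)) = (0, 0, h t * v)"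
        using hc by auto
    qed (use k I1 J1 Jf z deriv_id_ne in \<open>auto simp: is_interval_ball_real\<close>)
  qed
qed

text \<open>Case xi d_x + (h u + r) d_u.\<close>

lemma coreC:
  fixes T :: "real \<Rightarrow> real" and P :: "R3 \<Rightarrow> R3"
  assumes sr: "smooth2 (I0 \<times> J0) r" and sh: "smooth1 I0 h" and sxi: "smooth1 J0 \<xi>"
    and sub: "I \<subseteq> I0" and oI: "open I" "is_interval I" "I \<noteq> {}"
    and J1: "ball x1 e \<subseteq> J0" "e > 0" and xine: "\<forall>x\<in>ball x1 e. \<xi> x \<noteq> 0"
    and z: "\<forall>t\<in>I. \<tau> t = 0"
    and T: "smooth1 I T" "\<forall>t\<in>I. deriv T t \<noteq> 0"
    and c: "c \<noteq> 0" and Pm: "P \<in> canonical_list"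
    and HP: "\<And>t y v. t \<in> I \<Longrightarrow> c *\<^sub>R P (T t, y, v) = (0, c, h t * v)"
  shows "good I0 J0 \<tau> \<xi> h r g"
proof -
  define a1 where "a1 = x1 - 3 * e / 4"
  define b1 where "b1 = x1 + 3 * e / 4"
  define a2 where "a2 = x1 - e / 2"
  define b2 where "b2 = x1 + e / 2"
  have ab1: "{a1..b1} \<subseteq> ball x1 e" unfolding a1_def b1_def by (rule ball_sub_I[OF J1(2)])
  have ab2: "{a2..b2} \<subseteq> {a1<..<b1}" unfolding a1_def b1_def a2_def b2_def by (rule ball_sub_I2[OF J1(2)])
  have ab1o: "{a1<..<b1} \<subseteq> ball x1 e" unfolding a1_def b1_def by (rule Ioo_sub_ball[OF J1(2)])
  define ix where "ix = (\<lambda>x. inverse (\<xi> x))"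
  have six: "smooth1 (ball x1 e) ix" unfolding ix_def
    by (rule smooth1_inverse[OF open_ball smooth1_subset[OF sxi J1(1)]]) (use xine in auto)
  define B where "B = (\<lambda>x. integral {a1..x} ix)"
  have sB: "smooth1 {a1<..<b1} B" and dB: "\<And>x. x \<in> {a1<..<b1} \<Longrightarrow> (B has_real_derivative ix x) (at x)"
    using antideriv[OF open_ball six ab1] unfolding B_def by auto
  define S0 where "S0 = {a1<..<b1} \<times> I"
  have oS0: "open S0" unfolding S0_def using oI by (simp add: open_Times)
  define G where "G = (\<lambda>z::real\<times>real. exp (- (h (snd z) * B (fst z))) * r (snd z, fst z) * ix (fst z))"
  have sG: "smooth2 S0 G" unfolding smooth2_def G_def
  proof
    fix k
    have c1: "Ck2 k S0 (\<lambda>z. h (snd z))" by (rule smooth1_Ck2_snd[OF sh]) (use sub in \<open>auto simp: S0_def\<close>)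
    have c2: "Ck2 k S0 (\<lambda>z. B (fst z))" by (rule smooth1_Ck2_any[OF sB]) (auto simp: S0_def)
    have c3: "Ck2 k S0 (\<lambda>z. r (snd z, fst z))"
      by (rule Ck2_comp[OF smooth2_Ck2[OF sr] Ck2_snd Ck2_fst]) (use sub ab1o J1 in \<open>auto simp: S0_def\<close>)
    have c4: "Ck2 k S0 (\<lambda>z. ix (fst z))" by (rule smooth1_Ck2_any[OF six]) (use ab1o in \<open>auto simp: S0_def\<close>)
    show "Ck2 k S0 (\<lambda>z. exp (- (h (snd z) * B (fst z))) * r (snd z, fst z) * ix (fst z))"
      by (rule Ck2_mult[OF Ck2_mult[OF Ck2_exp[OF Ck2_uminus[OF Ck2_mult[OF c1 c2]]] c3] c4])
  qed
  have box: "{a2..b2} \<times> I \<subseteq> S0" using ab2 by (auto simp: S0_def)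
  define K where "K = (\<lambda>z. integral {a2..fst z} (\<lambda>s. G (s, snd z)))"
  have sK: "smooth2 ({a2<..<b2} \<times> I) K" unfolding K_def by (rule param_int_smooth2[OF oS0 box oI(1) sG])
  have cG: "continuous_on S0 G" using smooth2_Ck2[OF sG, of 0] by simp
  have dK: "((\<lambda>s. K (s, t)) has_real_derivative G (x, t)) (at x)" if "x \<in> {a2<..<b2}" "t \<in> I" for x t
    using param_int_slice[OF box cG, of x t] that unfolding K_def by auto
  define J where "J = {a2<..<b2}"
  have Jf: "open J" "is_interval J" "J \<noteq> {}" unfolding J_def using J1(2) Ioo_facts[of a2 b2]
    by (auto simp: a2_def b2_def)
  have "J \<subseteq> {a2..b2}" by (auto simp: J_def)
  then have JJ0: "J \<subseteq> J0" using ab2 ab1o J1(1) by blast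
  have Jab1: "J \<subseteq> {a1<..<b1}" using ab2 by (auto simp: J_def)
  define Y where "Y = (\<lambda>z::real\<times>real. exp (h (fst z) * B (snd z)) * (- K (snd z, fst z)))"
  have oIJ: "open (I \<times> J)" using oI Jf by (simp add: open_Times)
  have sY: "smooth2 (I \<times> J) Y" unfolding smooth2_def Y_def
  proof
    fix k
    have c1: "Ck2 k (I \<times> J) (\<lambda>z. h (fst z))" by (rule smooth1_Ck2_any[OF sh]) (use sub in auto)
    have c2: "Ck2 k (I \<times> J) (\<lambda>z. B (snd z))" by (rule smooth1_Ck2_snd[OF sB]) (use Jab1 in auto)
    have c3: "Ck2 k (I \<times> J) (\<lambda>z. K (snd z, fst z))"
      by (rule Ck2_comp[OF smooth2_Ck2[OF sK] Ck2_snd Ck2_fst]) (auto simp: J_def)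
    show "Ck2 k (I \<times> J) (\<lambda>z. exp (h (fst z) * B (snd z)) * - K (snd z, fst z))"
      by (rule Ck2_mult[OF Ck2_exp[OF Ck2_mult[OF c1 c2]] Ck2_uminus[OF c3]])
  qed
  have pdx: "\<xi> x * pd_x Y (t, x) = h t * Y (t, x) - r (t, x)" if t: "t \<in> I" and x: "x \<in> J" for t x
  proof -
    have x1: "x \<in> {a1<..<b1}" using x Jab1 by auto
    have e1: "((\<lambda>s. h t * B s) has_real_derivative h t * ix x) (at x)" by (rule DERIV_cmult[OF dB[OF x1]])
    have e2: "((\<lambda>s. exp (h t * B s)) has_real_derivative exp (h t * B x) * (h t * ix x)) (at x)"
      by (rule DERIV_fun_exp[OF e1])
    have e3: "((\<lambda>s. - K (s, t)) has_real_derivative - G (x, t)) (at x)"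
      by (rule DERIV_minus[OF dK]) (use x t in \<open>auto simp: J_def\<close>)
    have "((\<lambda>s. Y (t, s)) has_real_derivative
        exp (h t * B x) * (h t * ix x) * (- K (x, t)) + (- G (x, t)) * exp (h t * B x)) (at x)"
      unfolding Y_def using DERIV_mult[OF e2 e3] by simp
    then have "pd_x Y (t, x) = exp (h t * B x) * (h t * ix x) * (- K (x, t)) + (- G (x, t)) * exp (h t * B x)"
      unfolding pd_x_def by (simp add: DERIV_imp_deriv)
    moreover have "\<xi> x \<noteq> 0" using xine x ab1o Jab1 by auto
    ultimately show ?thesis
      by (simp add: Y_def G_def ix_def field_simps exp_minus)
  qed
  define X where "X = (\<lambda>x. c * B x)"
  have sX: "smooth1 J X" unfolding X_def by (rule smooth1_cmult[OF Jf(1) smooth1_subset[OF sB Jab1]])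
  have dX: "(X has_real_derivative c * ix x) (at x)" if "x \<in> J" for x
    unfolding X_def by (rule DERIV_cmult[OF dB]) (use that Jab1 in auto)
  have dXne: "deriv X x \<noteq> 0" if "x \<in> J" for x
  proof -
    have "\<xi> x \<noteq> 0" using xine that ab1o Jab1 by auto
    then show ?thesis using DERIV_imp_deriv[OF dX[OF that]] c by (simp add: ix_def)
  qed
  have push: "pushes_to (\<lambda>(t, x, u). (T t, X x, 1 * u + Y (t, x))) (I \<times> J \<times> (UNIV::real set))
      (Qfield \<tau> \<xi> h r) (\<lambda>q. c *\<^sub>R P q)"
  proof (rule push_first[where T'="deriv T" and X'="\<lambda>x. c * ix x" and U'="\<lambda>_. 0"
        and Ya="pd_t Y" and Yb="pd_x Y"])
    show "(T has_real_derivative deriv T t) (at t)" if "t \<in> I" for t using smooth1_D[OF T(1) that] .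
    show "(X has_real_derivative c * ix x) (at x)" if "x \<in> J" for x using dX[OF that] .
    show "((\<lambda>_. 1) has_real_derivative (\<lambda>_. 0) t) (at t)" for t by (simp add: DERIV_const)
    show "(Y has_derivative (\<lambda>(a, b). a * pd_t Y (t, x) + b * pd_x Y (t, x))) (at (t, x))"
      if "t \<in> I" "x \<in> J" for t x
      using smooth2_pd[OF oIJ sY] that by auto
    fix t x u assume t: "t \<in> I" and x: "x \<in> J"
    have tt: "\<tau> t = 0" using z t by auto
    have xx: "\<xi> x \<noteq> 0" using xine x ab1o Jab1 by auto
    have pd: "pd_x Y (t, x) * \<xi> x = h t * Y (t, x) - r (t, x)" using pdx[OF t x] by (simp add: mult.commute)
    show "c *\<^sub>R P (T t, X x, 1 * u + Y (t, x)) = (deriv T t * \<tau> t, c * ix x * \<xi> x,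
        (\<lambda>_. 0) t * \<tau> t * u + 1 * (h t * u + r (t, x)) + pd_t Y (t, x) * \<tau> t + pd_x Y (t, x) * \<xi> x)"
      using HP[OF t, of "X x" "1 * u + Y (t, x)"] tt xx pd by (simp add: ix_def algebra_simps)
  qed
  show ?thesis
  proof (rule goodI[where T=T and X=X and U="\<lambda>_. 1" and Y=Y and c=c and J=J])
    show "smooth1 I (\<lambda>_. 1)" using oI by (auto intro: smooth1_const)
    show "\<forall>t\<in>I. deriv T t \<noteq> 0 \<and> (1::real) \<noteq> 0" using T by auto
    show "\<forall>x\<in>J. deriv X x \<noteq> 0" using dXne by auto
    show "(\<exists>P\<in>canonical_list. pushes_to (\<lambda>(t, x, u). (T t, X x, 1 * u + Y (t, x)))
            (I \<times> J \<times> UNIV) (Qfield \<tau> \<xi> h r) (\<lambda>q. c *\<^sub>R P q))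
        \<or> (\<exists>s :: real \<times> real \<Rightarrow> real.
             (\<exists>q\<in>(\<lambda>(t, x, u). (T t, X x, 1 * u + Y (t, x))) ` (I \<times> J \<times> (UNIV::real set)). s (fst q, fst (snd q)) \<noteq> 0)
             \<and> pushes_to (\<lambda>(t, x, u). (T t, X x, 1 * u + Y (t, x))) (I \<times> J \<times> UNIV) (Qfield \<tau> \<xi> h r)
                  (\<lambda>(t, x, u). c *\<^sub>R (0, 0, s (t, x))))"
      by (rule disjI1, rule bexI[OF _ Pm], rule push)
  qed (use sub oI Jf JJ0 sY T c sX in auto)
qed

lemma caseC:
  assumes sr: "smooth2 (I0 \<times> J0) r" and sh: "smooth1 I0 h" and sxi: "smooth1 J0 \<xi>" and oI0: "open I0"
    and I1: "ball t0 e0 \<subseteq> I0" "e0 > 0" and z: "\<forall>t\<in>ball t0 e0. \<tau> t = 0"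
    and J1: "ball x1 e \<subseteq> J0" "e > 0" and xine: "\<forall>x\<in>ball x1 e. \<xi> x \<noteq> 0"
  shows "good I0 J0 \<tau> \<xi> h r g"
proof -
  from deriv_split[OF oI0 sh I1] show ?thesis
  proof
    assume "\<exists>t2 e3. e3 > 0 \<and> ball t2 e3 \<subseteq> ball t0 e0 \<and> (\<forall>s\<in>ball t2 e3. deriv h s \<noteq> 0)"
    then obtain t2 e3 where e3: "e3 > 0" "ball t2 e3 \<subseteq> ball t0 e0" "\<forall>s\<in>ball t2 e3. deriv h s \<noteq> 0"
      by blast
    show ?thesis
    proof (rule coreC[OF sr sh sxi _ _ _ _ J1 xine, where T=h and c=1 and P="\<lambda>(t, x, u). (0, 1, t * u)"
          and I="ball t2 e3"])
      show "smooth1 (ball t2 e3) h" by (rule smooth1_subset[OF sh]) (use e3 I1 in auto)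
      show "(\<lambda>(t, x, u). (0, 1, t * u)) \<in> canonical_list" by (simp add: canonical_list_def)
    qed (use e3 I1 z in \<open>auto simp: is_interval_ball_real\<close>)
  next
    assume hc: "\<forall>s\<in>ball t0 e0. h s = h t0"
    show ?thesis
    proof (cases "h t0 = 0")
      case True
      show ?thesis
      proof (rule coreC[OF sr sh sxi _ _ _ _ J1 xine, where T="\<lambda>t. t" and c=1 and P="\<lambda>(t, x, u). (0, 1, 0)"
            and I="ball t0 e0"])
        show "smooth1 (ball t0 e0) (\<lambda>t. t)" by (rule smooth1_id) simp
        show "(\<lambda>(t, x, u). (0, 1, 0)) \<in> canonical_list" by (simp add: canonical_list_def)
        show "\<And>t y v. t \<in> ball t0 e0 \<Longrightarrow> 1 *\<^sub>R (case (t, y, v) of (t, x, u) \<Rightarrow> (0, 1, 0)) = (0, 1, h t * v)"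
          using hc True by auto
      qed (use I1 z deriv_id_ne in \<open>auto simp: is_interval_ball_real\<close>)
    next
      case False
      show ?thesis
      proof (rule coreC[OF sr sh sxi _ _ _ _ J1 xine, where T="\<lambda>t. t" and c="h t0" and P="\<lambda>(t, x, u). (0, 1, u)"
            and I="ball t0 e0"])
        show "smooth1 (ball t0 e0) (\<lambda>t. t)" by (rule smooth1_id) simp
        show "(\<lambda>(t, x, u). (0, 1, u)) \<in> canonical_list" by (simp add: canonical_list_def)
        show "\<And>t y v. t \<in> ball t0 e0 \<Longrightarrow> h t0 *\<^sub>R (case (t, y, v) of (t, x, u) \<Rightarrow> (0, 1, u)) = (0, h t0, h t * v)"
          using hc by auto
      qed (use I1 z deriv_id_ne False in \<open>auto simp: is_interval_ball_real\<close>)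
    qed
  qed
qed

text \<open>Case tau d_t + (h u + r) d_u.\<close>

lemma coreB:
  assumes sr: "smooth2 (I0 \<times> J0) r" and sh: "smooth1 I0 h" and stau: "smooth1 I0 \<tau>"
    and I1: "ball t1 e \<subseteq> I0" "e > 0" and taune: "\<forall>t\<in>ball t1 e. \<tau> t \<noteq> 0"
    and subJ: "J \<subseteq> J0" and Jf: "open J" "is_interval J" "J \<noteq> {}" and z: "\<forall>x\<in>J. \<xi> x = 0"
  shows "good I0 J0 \<tau> \<xi> h r g"
proof -
  define a1 where "a1 = t1 - 3 * e / 4"
  define b1 where "b1 = t1 + 3 * e / 4"
  define a2 where "a2 = t1 - e / 2"
  define b2 where "b2 = t1 + e / 2"
  have ab1: "{a1..b1} \<subseteq> ball t1 e" unfolding a1_def b1_def by (rule ball_sub_I[OF I1(2)])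
  have ab2: "{a2..b2} \<subseteq> {a1<..<b1}" unfolding a1_def b1_def a2_def b2_def by (rule ball_sub_I2[OF I1(2)])
  have ab1o: "{a1<..<b1} \<subseteq> ball t1 e" unfolding a1_def b1_def by (rule Ioo_sub_ball[OF I1(2)])
  define it where "it = (\<lambda>t. inverse (\<tau> t))"
  have sit: "smooth1 (ball t1 e) it" unfolding it_def
    by (rule smooth1_inverse[OF open_ball smooth1_subset[OF stau I1(1)]]) (use taune in auto)
  define ht where "ht = (\<lambda>t. h t * it t)"
  have sht: "smooth1 (ball t1 e) ht" unfolding ht_def
    by (rule smooth1_mult[OF open_ball smooth1_subset[OF sh I1(1)] sit])
  define A where "A = (\<lambda>t. integral {a1..t} it)"
  have sA: "smooth1 {a1<..<b1} A" and dA: "\<And>t. t \<in> {a1<..<b1} \<Longrightarrow> (A has_real_derivative it t) (at t)"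
    using antideriv[OF open_ball sit ab1] unfolding A_def by auto
  define H where "H = (\<lambda>t. integral {a1..t} ht)"
  have sH: "smooth1 {a1<..<b1} H" and dH: "\<And>t. t \<in> {a1<..<b1} \<Longrightarrow> (H has_real_derivative ht t) (at t)"
    using antideriv[OF open_ball sht ab1] unfolding H_def by auto
  define U where "U = (\<lambda>t. exp (- H t))"
  have sU: "smooth1 {a1<..<b1} U" unfolding U_def
    by (rule smooth1_exp_comp[OF open_greaterThanLessThan smooth1_uminus[OF open_greaterThanLessThan sH]])
  have dU: "(U has_real_derivative exp (- H t) * (- ht t)) (at t)" if "t \<in> {a1<..<b1}" for t
    unfolding U_def by (rule DERIV_fun_exp[OF DERIV_minus[OF dH[OF that]]])
  define S0 where "S0 = {a1<..<b1} \<times> J"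
  have oS0: "open S0" unfolding S0_def using Jf by (simp add: open_Times)
  define G where "G = (\<lambda>z::real\<times>real. U (fst z) * r z * it (fst z))"
  have sG: "smooth2 S0 G" unfolding smooth2_def G_def
  proof
    fix k
    have c1: "Ck2 k S0 (\<lambda>z. U (fst z))" by (rule smooth1_Ck2_any[OF sU]) (auto simp: S0_def)
    have c2: "Ck2 k S0 r" by (rule smooth2_sub[OF sr]) (use ab1o I1 subJ in \<open>auto simp: S0_def\<close>)
    have c3: "Ck2 k S0 (\<lambda>z. it (fst z))" by (rule smooth1_Ck2_any[OF sit]) (use ab1o in \<open>auto simp: S0_def\<close>)
    show "Ck2 k S0 (\<lambda>z. U (fst z) * r z * it (fst z))"
      by (rule Ck2_mult[OF Ck2_mult[OF c1 c2] c3])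
  qed
  have box: "{a2..b2} \<times> J \<subseteq> S0" using ab2 by (auto simp: S0_def)
  define Y where "Y = (\<lambda>z. - integral {a2..fst z} (\<lambda>s. G (s, snd z)))"
  define I where "I = {a2<..<b2}"
  have If: "open I" "is_interval I" "I \<noteq> {}" unfolding I_def using I1(2) Ioo_facts[of a2 b2]
    by (auto simp: a2_def b2_def)
  have "I \<subseteq> {a2..b2}" by (auto simp: I_def)
  then have Iab1: "I \<subseteq> {a1<..<b1}" using ab2 by blast
  have II0: "I \<subseteq> I0" using Iab1 ab1o I1(1) by blast
  have sY: "smooth2 (I \<times> J) Y" unfolding smooth2_def Y_def I_def
    using param_int_smooth2[OF oS0 box Jf(1) sG] Ck2_uminus unfolding smooth2_def by blast
  have oIJ: "open (I \<times> J)" using If Jf by (simp add: open_Times)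
  have cG: "continuous_on S0 G" using smooth2_Ck2[OF sG, of 0] by simp
  have pdt: "pd_t Y (t, x) = - G (t, x)" if t: "t \<in> I" and x: "x \<in> J" for t x
  proof -
    have "((\<lambda>s. integral {a2..s} (\<lambda>s. G (s, x))) has_real_derivative G (t, x)) (at t)"
      using param_int_slice[OF box cG, of t x] t x by (auto simp: I_def)
    then have "((\<lambda>s. Y (s, x)) has_real_derivative - G (t, x)) (at t)"
      unfolding Y_def using DERIV_minus by fastforce
    then show ?thesis unfolding pd_t_def by (simp add: DERIV_imp_deriv)
  qed
  have push: "pushes_to (\<lambda>(t, x, u). (A t, x, U t * u + Y (t, x))) (I \<times> J \<times> (UNIV::real set))
      (Qfield \<tau> \<xi> h r) (\<lambda>q. 1 *\<^sub>R (\<lambda>(t, x, u). (1, 0, 0)) q)"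
  proof (rule push_first[where T'="it" and X'="\<lambda>_. 1" and U'="\<lambda>t. exp (- H t) * (- ht t)"
        and Ya="pd_t Y" and Yb="pd_x Y"])
    show "(A has_real_derivative it t) (at t)" if "t \<in> I" for t using dA that Iab1 by auto
    show "((\<lambda>t. t) has_real_derivative (\<lambda>_. 1) x) (at x)" for x by (simp add: DERIV_ident)
    show "(U has_real_derivative exp (- H t) * (- ht t)) (at t)" if "t \<in> I" for t using dU that Iab1 by auto
    show "(Y has_derivative (\<lambda>(a, b). a * pd_t Y (t, x) + b * pd_x Y (t, x))) (at (t, x))"
      if "t \<in> I" "x \<in> J" for t x
      using smooth2_pd[OF oIJ sY] that by auto
    fix t x u assume t: "t \<in> I" and x: "x \<in> J"
    have tt: "\<tau> t \<noteq> 0" using taune t Iab1 ab1o by auto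
    have xx: "\<xi> x = 0" using z x by auto
    show "1 *\<^sub>R (\<lambda>(t, x, u). (1, 0, 0)) (A t, x, U t * u + Y (t, x)) = (it t * \<tau> t, (\<lambda>_. 1) x * \<xi> x,
        exp (- H t) * (- ht t) * \<tau> t * u + U t * (h t * u + r (t, x)) + pd_t Y (t, x) * \<tau> t + pd_x Y (t, x) * \<xi> x)"
      using tt xx pdt[OF t x] by (simp add: it_def ht_def U_def G_def field_simps)
  qed
  show ?thesis
  proof (rule goodI[where T=A and X="\<lambda>x. x" and U=U and Y=Y and c=1 and I=I])
    show "smooth1 I A" by (rule smooth1_subset[OF sA Iab1])
    show "smooth1 I U" by (rule smooth1_subset[OF sU Iab1])
    show "smooth1 J (\<lambda>x. x)" using Jf by (auto intro: smooth1_id)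
    show "\<forall>t\<in>I. deriv A t \<noteq> 0 \<and> U t \<noteq> 0"
    proof
      fix t assume t: "t \<in> I"
      have "deriv A t = it t" using DERIV_imp_deriv[OF dA] t Iab1 by auto
      moreover have "\<tau> t \<noteq> 0" using taune t Iab1 ab1o by auto
      ultimately show "deriv A t \<noteq> 0 \<and> U t \<noteq> 0" by (simp add: it_def U_def)
    qed
    show "\<forall>x\<in>J. deriv (\<lambda>x. x) x \<noteq> 0" using deriv_id_ne by auto
    show "(\<exists>P\<in>canonical_list. pushes_to (\<lambda>(t, x, u). (A t, x, U t * u + Y (t, x)))
            (I \<times> J \<times> UNIV) (Qfield \<tau> \<xi> h r) (\<lambda>q. 1 *\<^sub>R P q))
        \<or> (\<exists>s :: real \<times> real \<Rightarrow> real.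
             (\<exists>q\<in>(\<lambda>(t, x, u). (A t, x, U t * u + Y (t, x))) ` (I \<times> J \<times> (UNIV::real set)). s (fst q, fst (snd q)) \<noteq> 0)
             \<and> pushes_to (\<lambda>(t, x, u). (A t, x, U t * u + Y (t, x))) (I \<times> J \<times> UNIV) (Qfield \<tau> \<xi> h r)
                  (\<lambda>(t, x, u). 1 *\<^sub>R (0, 0, s (t, x))))"
      by (rule disjI1, rule bexI[OF _ canon], rule push)
  qed (use II0 If Jf subJ sY in auto)
qed



lemma canonA: "(\<lambda>(t, x, u). (t::real, x::real, 0::real)) \<in> canonical_list"
  by (simp add: canonical_list_def)

lemma cont_eps:
  fixes f :: "real \<Rightarrow> real"
  assumes "(f has_real_derivative D) (at x)" "e > 0"
  shows "\<exists>d>0. \<forall>y. dist y x < d \<longrightarrow> dist (f y) (f x) < e"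
proof -
  have "isCont f x" by (rule DERIV_isCont[OF assms(1)])
  then show ?thesis using assms(2) unfolding continuous_at_eps_delta by blast
qed

text \<open>Generic case tau d_t + xi d_x + (h u + r) d_u.\<close>

lemma coreA:
  assumes sr: "smooth2 (I0 \<times> J0) r" and sh: "smooth1 I0 h" and stau: "smooth1 I0 \<tau>" and sxi: "smooth1 J0 \<xi>"
    and I1: "ball t1 e1 \<subseteq> I0" "e1 > 0" and taune: "\<forall>t\<in>ball t1 e1. \<tau> t \<noteq> 0"
    and J1: "ball x1 e2 \<subseteq> J0" "e2 > 0" and xine: "\<forall>x\<in>ball x1 e2. \<xi> x \<noteq> 0"
  shows "good I0 J0 \<tau> \<xi> h r g"
proof -
  define a1 where "a1 = t1 - 3 * e1 / 4"
  define b1 where "b1 = t1 + 3 * e1 / 4"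
  have ab1: "{a1..b1} \<subseteq> ball t1 e1" unfolding a1_def b1_def by (rule ball_sub_I[OF I1(2)])
  have ab1o: "{a1<..<b1} \<subseteq> ball t1 e1" unfolding a1_def b1_def by (rule Ioo_sub_ball[OF I1(2)])
  define it where "it = (\<lambda>t. inverse (\<tau> t))"
  have sit: "smooth1 (ball t1 e1) it" unfolding it_def
    by (rule smooth1_inverse[OF open_ball smooth1_subset[OF stau I1(1)]]) (use taune in auto)
  define ht where "ht = (\<lambda>t. h t * it t)"
  have sht: "smooth1 (ball t1 e1) ht" unfolding ht_def
    by (rule smooth1_mult[OF open_ball smooth1_subset[OF sh I1(1)] sit])
  define A where "A = (\<lambda>t. integral {a1..t} it)"
  have sA: "smooth1 {a1<..<b1} A" and dA: "\<And>t. t \<in> {a1<..<b1} \<Longrightarrow> (A has_real_derivative it t) (at t)"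
    using antideriv[OF open_ball sit ab1] unfolding A_def by auto
  define H where "H = (\<lambda>t. integral {a1..t} ht)"
  have sH: "smooth1 {a1<..<b1} H" and dH: "\<And>t. t \<in> {a1<..<b1} \<Longrightarrow> (H has_real_derivative ht t) (at t)"
    using antideriv[OF open_ball sht ab1] unfolding H_def by auto
  define U where "U = (\<lambda>t. exp (- H t))"
  have sU: "smooth1 {a1<..<b1} U" unfolding U_def
    by (rule smooth1_exp_comp[OF open_greaterThanLessThan smooth1_uminus[OF open_greaterThanLessThan sH]])
  have dU: "(U has_real_derivative exp (- H t) * (- ht t)) (at t)" if "t \<in> {a1<..<b1}" for t
    unfolding U_def by (rule DERIV_fun_exp[OF DERIV_minus[OF dH[OF that]]])
  define c1 where "c1 = x1 - 3 * e2 / 4"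
  define d1 where "d1 = x1 + 3 * e2 / 4"
  have cd1: "{c1..d1} \<subseteq> ball x1 e2" unfolding c1_def d1_def by (rule ball_sub_I[OF J1(2)])
  have cd1o: "{c1<..<d1} \<subseteq> ball x1 e2" unfolding c1_def d1_def by (rule Ioo_sub_ball[OF J1(2)])
  define ix where "ix = (\<lambda>x. inverse (\<xi> x))"
  have six: "smooth1 (ball x1 e2) ix" unfolding ix_def
    by (rule smooth1_inverse[OF open_ball smooth1_subset[OF sxi J1(1)]]) (use xine in auto)
  define B where "B = (\<lambda>x. integral {c1..x} ix)"
  have sB: "smooth1 {c1<..<d1} B" and dB: "\<And>x. x \<in> {c1<..<d1} \<Longrightarrow> (B has_real_derivative ix x) (at x)"
    using antideriv[OF open_ball six cd1] unfolding B_def by auto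
  define JB where "JB = {c1<..<d1}"
  have JBf: "open JB" "is_interval JB" using Ioo_facts[of c1 d1] J1(2) by (auto simp: JB_def c1_def d1_def)
  have dBne: "\<forall>x\<in>JB. deriv B x \<noteq> 0"
  proof
    fix x assume x: "x \<in> JB"
    have "deriv B x = ix x" using DERIV_imp_deriv[OF dB] x by (auto simp: JB_def)
    moreover have "\<xi> x \<noteq> 0" using xine x cd1o by (auto simp: JB_def)
    ultimately show "deriv B x \<noteq> 0" by (simp add: ix_def)
  qed
  have sBJ: "smooth1 JB B" using sB by (simp add: JB_def)
  note inv = inverse_smooth[OF JBf sBJ dBne]
  define W where "W = B ` JB"
  define Binv where "Binv = inv_into JB B"
  have oW: "open W" using inv(1) by (simp add: W_def)
  have BinvB: "\<And>x. x \<in> JB \<Longrightarrow> Binv (B x) = x" using inv(2) by (simp add: Binv_def)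
  have BinvW: "\<And>y. y \<in> W \<Longrightarrow> Binv y \<in> JB" using inv(3) by (simp add: Binv_def W_def)
  have sBinv: "smooth1 W Binv" using inv(4) by (simp add: Binv_def W_def)
  have x1JB: "x1 \<in> JB" using J1(2) by (simp add: JB_def c1_def d1_def)
  have t1I: "t1 \<in> {a1<..<b1}" using I1(2) by (simp add: a1_def b1_def)
  define \<beta> where "\<beta> = B x1"
  define \<alpha> where "\<alpha> = A t1"
  have "\<beta> \<in> W" using x1JB by (simp add: W_def \<beta>_def)
  then obtain \<delta> where \<delta>: "\<delta> > 0" "ball \<beta> \<delta> \<subseteq> W" using oW open_contains_ball by blast
  obtain \<eta>1 where \<eta>1: "\<eta>1 > 0" "\<forall>t. dist t t1 < \<eta>1 \<longrightarrow> dist (A t) \<alpha> < \<delta> / 4"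
    using cont_eps[OF dA[OF t1I], of "\<delta> / 4"] \<delta>(1) unfolding \<alpha>_def by auto
  obtain \<eta>2 where \<eta>2: "\<eta>2 > 0" "\<forall>x. dist x x1 < \<eta>2 \<longrightarrow> dist (B x) \<beta> < \<delta> / 4"
    using cont_eps[OF dB[OF x1JB[unfolded JB_def]], of "\<delta> / 4"] \<delta>(1) unfolding \<beta>_def by auto
  define \<eta> where "\<eta> = min \<eta>1 (e1 / 4)"
  define \<eta>' where "\<eta>' = min \<eta>2 (e2 / 4)"
  have \<eta>pos: "\<eta> > 0" "\<eta>' > 0" using \<eta>1 \<eta>2 I1 J1 by (auto simp: \<eta>_def \<eta>'_def)
  have bt: "ball t1 \<eta> \<subseteq> {a1<..<b1}" using I1(2)
    by (auto simp: \<eta>_def a1_def b1_def ball_eq_greaterThanLessThan)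
  have bx: "ball x1 \<eta>' \<subseteq> JB" using J1(2)
    by (auto simp: \<eta>'_def c1_def d1_def JB_def ball_eq_greaterThanLessThan)
  have Abd: "\<bar>A t - \<alpha>\<bar> < \<delta> / 4" if "t \<in> ball t1 \<eta>" for t
    using \<eta>1(2)[rule_format, of t] that by (auto simp: \<eta>_def dist_real_def dist_commute)
  have Bbd: "\<bar>B x - \<beta>\<bar> < \<delta> / 4" if "x \<in> ball x1 \<eta>'" for x
    using \<eta>2(2)[rule_format, of x] that by (auto simp: \<eta>'_def dist_real_def dist_commute)
  define \<gamma> where "\<gamma> = \<beta> - \<alpha>"
  define C where "C = ball \<gamma> (3 * \<delta> / 4)"
  define S0 where "S0 = ball t1 \<eta> \<times> C"
  have oS0: "open S0" by (simp add: S0_def C_def open_Times)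
  have memW: "snd z + A (fst z) \<in> W" if z: "z \<in> S0" for z
  proof -
    have "\<bar>snd z - \<gamma>\<bar> < 3 * \<delta> / 4" using z by (auto simp: S0_def C_def dist_real_def abs_minus_commute)
    moreover have "\<bar>A (fst z) - \<alpha>\<bar> < \<delta> / 4" using Abd z by (auto simp: S0_def)
    ultimately have "dist (snd z + A (fst z)) \<beta> < \<delta>" by (simp add: dist_real_def \<gamma>_def abs_if split: if_splits)
    then show ?thesis using \<delta>(2) by (auto simp: dist_commute)
  qed
  define Gf where "Gf = (\<lambda>z::real\<times>real. - (U (fst z) * r (fst z, Binv (snd z + A (fst z)))) * it (fst z))"
  have sGf: "smooth2 S0 Gf" unfolding smooth2_def Gf_def
  proof
    fix k
    have cU: "Ck2 k S0 (\<lambda>z. U (fst z))" by (rule smooth1_Ck2_any[OF sU]) (use bt in \<open>auto simp: S0_def\<close>)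
    have cArg: "Ck2 k S0 (\<lambda>z. snd z + A (fst z))"
      by (rule Ck2_add[OF Ck2_snd smooth1_Ck2_any[OF sA]]) (use bt in \<open>auto simp: S0_def\<close>)
    have cBi: "Ck2 k S0 (\<lambda>z. Binv (snd z + A (fst z)))" by (rule Ck2_sm1[OF sBinv cArg memW])
    have cR: "Ck2 k S0 (\<lambda>z. r (fst z, Binv (snd z + A (fst z))))"
    proof (rule Ck2_comp[OF smooth2_Ck2[OF sr] Ck2_fst cBi])
      fix z assume z: "z \<in> S0"
      have "fst z \<in> ball t1 \<eta>" using z by (auto simp: S0_def)
      then have "fst z \<in> I0" using bt ab1o I1(1) by blast
      moreover have "Binv (snd z + A (fst z)) \<in> J0" using BinvW[OF memW[OF z]] cd1o J1(1) by (auto simp: JB_def)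
      ultimately show "(fst z, Binv (snd z + A (fst z))) \<in> I0 \<times> J0" by simp
    qed
    have cit: "Ck2 k S0 (\<lambda>z. it (fst z))" by (rule smooth1_Ck2_any[OF sit]) (use bt ab1o in \<open>auto simp: S0_def\<close>)
    show "Ck2 k S0 (\<lambda>z. - (U (fst z) * r (fst z, Binv (snd z + A (fst z)))) * it (fst z))"
      by (rule Ck2_mult[OF Ck2_uminus[OF Ck2_mult[OF cU cR]] cit])
  qed
  define a where "a = t1 - \<eta> / 2"
  define b where "b = t1 + \<eta> / 2"
  have box: "{a..b} \<times> C \<subseteq> S0" using \<eta>pos
    by (auto simp: a_def b_def S0_def ball_eq_greaterThanLessThan)
  define K where "K = (\<lambda>z. integral {a..fst z} (\<lambda>s. Gf (s, snd z)))"
  have oC: "open C" by (simp add: C_def)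
  have sK: "smooth2 ({a<..<b} \<times> C) K" unfolding K_def by (rule param_int_smooth2[OF oS0 box oC sGf])
  have oK: "open ({a<..<b} \<times> C)" by (simp add: C_def open_Times)
  have cGf: "continuous_on S0 Gf" using smooth2_Ck2[OF sGf, of 0] by simp
  have K1: "pd_t K (t, c) = Gf (t, c)" if "t \<in> {a<..<b}" "c \<in> C" for t c
  proof -
    have "((\<lambda>s. K (s, c)) has_real_derivative Gf (t, c)) (at t)"
      using param_int_slice[OF box cGf, of t c] that unfolding K_def by auto
    moreover have "((\<lambda>s. K (s, c)) has_real_derivative pd_t K (t, c)) (at t)"
      by (rule smooth2_slice1[OF oK sK]) (use that in auto)
    ultimately show ?thesis using DERIV_unique by blast
  qed
  define I where "I = {a<..<b}"
  define J where "J = ball x1 \<eta>'"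
  have If: "open I" "is_interval I" "I \<noteq> {}" unfolding I_def using \<eta>pos Ioo_facts[of a b]
    by (auto simp: a_def b_def)
  have Jf: "open J" "is_interval J" "J \<noteq> {}" unfolding J_def using \<eta>pos
    by (auto simp: is_interval_ball_real)
  have Ibt: "I \<subseteq> ball t1 \<eta>" using \<eta>pos by (auto simp: I_def a_def b_def ball_eq_greaterThanLessThan)
  have Iab1: "I \<subseteq> {a1<..<b1}" using Ibt bt by blast
  have II0: "I \<subseteq> I0" using Iab1 ab1o I1(1) by blast
  have JJB: "J \<subseteq> JB" using bx by (simp add: J_def)
  have JJ0: "J \<subseteq> J0" using JJB cd1o J1(1) by (auto simp: JB_def)
  have mem: "(t, B x - A t) \<in> {a<..<b} \<times> C" if t: "t \<in> I" and x: "x \<in> J" for t x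
  proof -
    have "\<bar>A t - \<alpha>\<bar> < \<delta> / 4" using Abd t Ibt by auto
    moreover have "\<bar>B x - \<beta>\<bar> < \<delta> / 4" using Bbd x by (auto simp: J_def)
    ultimately have "dist (B x - A t) \<gamma> < 3 * \<delta> / 4" by (simp add: dist_real_def \<gamma>_def abs_if split: if_splits)
    then show ?thesis using t by (simp add: I_def C_def dist_commute)
  qed
  define Y where "Y = (\<lambda>z::real\<times>real. K (fst z, B (snd z) - A (fst z)))"
  have oIJ: "open (I \<times> J)" using If Jf by (simp add: open_Times)
  have sY: "smooth2 (I \<times> J) Y" unfolding smooth2_def Y_def
  proof
    fix k
    have cB: "Ck2 k (I \<times> J) (\<lambda>z. B (snd z))" by (rule smooth1_Ck2_snd[OF sB]) (use JJB in \<open>auto simp: JB_def\<close>)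
    have cA: "Ck2 k (I \<times> J) (\<lambda>z. A (fst z))" by (rule smooth1_Ck2_any[OF sA]) (use Iab1 in auto)
    show "Ck2 k (I \<times> J) (\<lambda>z. K (fst z, B (snd z) - A (fst z)))"
      by (rule Ck2_comp[OF smooth2_Ck2[OF sK] Ck2_fst Ck2_diff[OF cB cA]]) (use mem in auto)
  qed
  have dY: "(Y has_derivative (\<lambda>(p, q). p * (pd_t K (t, B x - A t) - it t * pd_x K (t, B x - A t))
                                   + q * (ix x * pd_x K (t, B x - A t)))) (at (t, x))"
    if t: "t \<in> I" and x: "x \<in> J" for t x
  proof -
    have dB': "(B has_derivative (*) (ix x)) (at x)"
      using dB[of x] x JJB unfolding has_field_derivative_def by (auto simp: JB_def)
    have dA': "(A has_derivative (*) (it t)) (at t)"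
      using dA[of t] t Iab1 unfolding has_field_derivative_def by auto
    have hB: "((\<lambda>z::real\<times>real. B (snd z)) has_derivative (\<lambda>v. ix x * snd v)) (at (t, x))"
      using has_derivative_compose[OF has_derivative_snd[OF has_derivative_ident, of "at (t, x)"], of B] dB'
      by simp
    have hA: "((\<lambda>z::real\<times>real. A (fst z)) has_derivative (\<lambda>v. it t * fst v)) (at (t, x))"
      using has_derivative_compose[OF has_derivative_fst[OF has_derivative_ident, of "at (t, x)"], of A] dA'
      by simp
    have hm: "((\<lambda>z::real\<times>real. (fst z, B (snd z) - A (fst z))) has_derivative
        (\<lambda>v. (fst v, ix x * snd v - it t * fst v))) (at (t, x))"
      by (rule has_derivative_Pair[OF has_derivative_fst[OF has_derivative_ident] has_derivative_diff[OF hB hA]])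
    have hK: "(K has_derivative (\<lambda>(p, q). p * pd_t K (t, B x - A t) + q * pd_x K (t, B x - A t)))
        (at ((\<lambda>z::real\<times>real. (fst z, B (snd z) - A (fst z))) (t, x)))"
      using smooth2_pd[OF oK sK mem[OF t x]] by simp
    from has_derivative_compose[OF hm hK] show ?thesis unfolding Y_def
      by (rule has_derivative_eq_rhs) (auto simp: fun_eq_iff algebra_simps)
  qed
  have push: "pushes_to (\<lambda>(t, x, u). (exp (A t), exp (B x), U t * u + Y (t, x))) (I \<times> J \<times> (UNIV::real set))
      (Qfield \<tau> \<xi> h r) (\<lambda>q. 1 *\<^sub>R (\<lambda>(t, x, u). (t, x, 0)) q)"
  proof (rule push_first[where T'="\<lambda>t. exp (A t) * it t" and X'="\<lambda>x. exp (B x) * ix x"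
        and U'="\<lambda>t. exp (- H t) * (- ht t)"
        and Ya="\<lambda>(t, x). pd_t K (t, B x - A t) - it t * pd_x K (t, B x - A t)"
        and Yb="\<lambda>(t, x). ix x * pd_x K (t, B x - A t)"])
    show "((\<lambda>t. exp (A t)) has_real_derivative exp (A t) * it t) (at t)" if "t \<in> I" for t
      using DERIV_fun_exp[OF dA[of t]] that Iab1 by auto
    show "((\<lambda>x. exp (B x)) has_real_derivative exp (B x) * ix x) (at x)" if "x \<in> J" for x
      using DERIV_fun_exp[OF dB[of x]] that JJB by (auto simp: JB_def)
    show "(U has_real_derivative exp (- H t) * (- ht t)) (at t)" if "t \<in> I" for t using dU that Iab1 by auto
    show "(Y has_derivative (\<lambda>(p, q). p * (\<lambda>(t, x). pd_t K (t, B x - A t) - it t * pd_x K (t, B x - A t)) (t, x)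
            + q * (\<lambda>(t, x). ix x * pd_x K (t, B x - A t)) (t, x))) (at (t, x))"
      if "t \<in> I" "x \<in> J" for t x
      using dY[OF that] by simp
    fix t x u assume t: "t \<in> I" and x: "x \<in> J"
    have tt: "\<tau> t \<noteq> 0" using taune t Iab1 ab1o by auto
    have xx: "\<xi> x \<noteq> 0" using xine x JJB cd1o by (auto simp: JB_def)
    have k1: "pd_t K (t, B x - A t) = - (U t * r (t, x)) * it t"
      using K1[of t "B x - A t"] mem[OF t x] BinvB[of x] x JJB by (auto simp: Gf_def)
    show "1 *\<^sub>R (\<lambda>(t, x, u). (t, x, 0)) (exp (A t), exp (B x), U t * u + Y (t, x)) =
       (exp (A t) * it t * \<tau> t, exp (B x) * ix x * \<xi> x,
        exp (- H t) * - ht t * \<tau> t * u + U t * (h t * u + r (t, x)) +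
        (\<lambda>(t, x). pd_t K (t, B x - A t) - it t * pd_x K (t, B x - A t)) (t, x) * \<tau> t +
        (\<lambda>(t, x). ix x * pd_x K (t, B x - A t)) (t, x) * \<xi> x)"
      using tt xx k1 by (simp add: it_def ix_def ht_def U_def field_simps)
  qed
  show ?thesis
  proof (rule goodI[where T="\<lambda>t. exp (A t)" and X="\<lambda>x. exp (B x)" and U=U and Y=Y and c=1 and I=I and J=J])
    show "smooth1 I (\<lambda>t. exp (A t))" by (rule smooth1_exp_comp[OF If(1) smooth1_subset[OF sA Iab1]])
    have "J \<subseteq> {c1<..<d1}" using JJB by (simp add: JB_def)
    then show "smooth1 J (\<lambda>x. exp (B x))" by (rule smooth1_exp_comp[OF Jf(1) smooth1_subset[OF sB]])
    show "smooth1 I U" by (rule smooth1_subset[OF sU Iab1])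
    show "\<forall>t\<in>I. deriv (\<lambda>t. exp (A t)) t \<noteq> 0 \<and> U t \<noteq> 0"
    proof
      fix t assume t: "t \<in> I"
      have "deriv (\<lambda>t. exp (A t)) t = exp (A t) * it t"
        using DERIV_imp_deriv[OF DERIV_fun_exp[OF dA[of t]]] t Iab1 by auto
      moreover have "\<tau> t \<noteq> 0" using taune t Iab1 ab1o by auto
      ultimately show "deriv (\<lambda>t. exp (A t)) t \<noteq> 0 \<and> U t \<noteq> 0" by (simp add: it_def U_def)
    qed
    show "\<forall>x\<in>J. deriv (\<lambda>x. exp (B x)) x \<noteq> 0"
    proof
      fix x assume x: "x \<in> J"
      have "deriv (\<lambda>x. exp (B x)) x = exp (B x) * ix x"
        using DERIV_imp_deriv[OF DERIV_fun_exp[OF dB[of x]]] x JJB by (auto simp: JB_def)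
      moreover have "\<xi> x \<noteq> 0" using xine x JJB cd1o by (auto simp: JB_def)
      ultimately show "deriv (\<lambda>x. exp (B x)) x \<noteq> 0" by (simp add: ix_def)
    qed
    show "(\<exists>P\<in>canonical_list. pushes_to (\<lambda>(t, x, u). (exp (A t), exp (B x), U t * u + Y (t, x)))
            (I \<times> J \<times> UNIV) (Qfield \<tau> \<xi> h r) (\<lambda>q. 1 *\<^sub>R P q))
        \<or> (\<exists>s :: real \<times> real \<Rightarrow> real.
             (\<exists>q\<in>(\<lambda>(t, x, u). (exp (A t), exp (B x), U t * u + Y (t, x))) ` (I \<times> J \<times> (UNIV::real set)). s (fst q, fst (snd q)) \<noteq> 0)
             \<and> pushes_to (\<lambda>(t, x, u). (exp (A t), exp (B x), U t * u + Y (t, x))) (I \<times> J \<times> UNIV) (Qfield \<tau> \<xi> h r)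
                  (\<lambda>(t, x, u). 1 *\<^sub>R (0, 0, s (t, x))))"
      by (rule disjI1, rule bexI[OF _ canonA], rule push)
  qed (use II0 If Jf JJ0 sY in auto)
qed

theorem theorem3:
  fixes \<tau> \<xi> h :: "real \<Rightarrow> real"
    and r g :: "real \<times> real \<Rightarrow> real"
    and I0 J0 :: "real set"
  assumes "open I0" and "open J0"
    and "smooth1 I0 \<tau>" and "smooth1 J0 \<xi>" and "smooth1 I0 h"
    and "smooth2 (I0 \<times> J0) r"
    and "smooth2 (I0 \<times> J0) g" and "\<forall>p\<in>I0 \<times> J0. pd_x g p \<noteq> 0"
    and "\<exists>p\<in>I0 \<times> J0 \<times> UNIV. Qfield \<tau> \<xi> h r p \<noteq> 0"
  shows "\<exists>I J \<phi>. open I \<and> open J \<and> I \<noteq> {} \<and> J \<noteq> {} \<and> I \<subseteq> I0 \<and> J \<subseteq> J0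
           \<and> is_interval I \<and> is_interval J
           \<and> (cv_first I J \<phi> \<or> cv_second g I J \<phi>)
           \<and> (\<exists>c. c \<noteq> 0 \<and>
                ((\<exists>P\<in>canonical_list.
                    pushes_to \<phi> (I \<times> J \<times> UNIV) (Qfield \<tau> \<xi> h r) (\<lambda>q. c *\<^sub>R P q))
                 \<or> (\<exists>s :: real \<times> real \<Rightarrow> real.
                      (\<exists>q\<in>\<phi> ` (I \<times> J \<times> UNIV). s (fst q, fst (snd q)) \<noteq> 0)
                      \<and> pushes_to \<phi> (I \<times> J \<times> UNIV) (Qfield \<tau> \<xi> h r)
                           (\<lambda>(t, x, u). c *\<^sub>R (0, 0, s (t, x))))))"
proof -
  note oI0 = assms(1) and oJ0 = assms(2) and stau = assms(3) and sxi = assms(4) and sh = assms(5)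
    and sr = assms(6)
  obtain t0 x0 u0 where p0: "t0 \<in> I0" "x0 \<in> J0" and Q0: "Qfield \<tau> \<xi> h r (t0, x0, u0) \<noteq> 0"
    using assms(9) by auto
  obtain \<epsilon> where \<epsilon>: "\<epsilon> > 0" "ball t0 \<epsilon> \<subseteq> I0" using oI0 p0(1) open_contains_ball by blast
  obtain \<epsilon>' where \<epsilon>': "\<epsilon>' > 0" "ball x0 \<epsilon>' \<subseteq> J0" using oJ0 p0(2) open_contains_ball by blast
  have ctau: "continuous_on (ball t0 \<epsilon>) \<tau>" using smooth1_cont[OF smooth1_subset[OF stau \<epsilon>(2)]] .
  have cxi: "continuous_on (ball x0 \<epsilon>') \<xi>" using smooth1_cont[OF smooth1_subset[OF sxi \<epsilon>'(2)]] .
  have ch: "continuous_on (ball t0 \<epsilon>) h" using smooth1_cont[OF smooth1_subset[OF sh \<epsilon>(2)]] .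
  have G: "good I0 J0 \<tau> \<xi> h r g"
  proof (cases "\<exists>t1\<in>ball t0 \<epsilon>. \<tau> t1 \<noteq> 0")
    case True
    then obtain t1 where t1: "t1 \<in> ball t0 \<epsilon>" "\<tau> t1 \<noteq> 0" by blast
    from nonzero_ball[OF open_ball ctau t1] obtain e1 where
      e1: "e1 > 0" "ball t1 e1 \<subseteq> ball t0 \<epsilon>" "\<forall>y\<in>ball t1 e1. \<tau> y \<noteq> 0" by blast
    have I1: "ball t1 e1 \<subseteq> I0" using e1(2) \<epsilon>(2) by blast
    show ?thesis
    proof (cases "\<exists>x1\<in>ball x0 \<epsilon>'. \<xi> x1 \<noteq> 0")
      case True
      then obtain x1 where x1: "x1 \<in> ball x0 \<epsilon>'" "\<xi> x1 \<noteq> 0" by blast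
      from nonzero_ball[OF open_ball cxi x1] obtain e2 where
        e2: "e2 > 0" "ball x1 e2 \<subseteq> ball x0 \<epsilon>'" "\<forall>y\<in>ball x1 e2. \<xi> y \<noteq> 0" by blast
      have J1: "ball x1 e2 \<subseteq> J0" using e2(2) \<epsilon>'(2) by blast
      show ?thesis by (rule coreA[OF sr sh stau sxi I1 e1(1) e1(3) J1 e2(1) e2(3)])
    next
      case False
      then have z: "\<forall>x\<in>ball x0 \<epsilon>'. \<xi> x = 0" by blast
      show ?thesis
        by (rule coreB[OF sr sh stau I1 e1(1) e1(3) \<epsilon>'(2) _ _ _ z]) (use \<epsilon>' in \<open>auto simp: is_interval_ball_real\<close>)
    qed
  next
    case False
    then have zt: "\<forall>t\<in>ball t0 \<epsilon>. \<tau> t = 0" by blast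
    show ?thesis
    proof (cases "\<exists>x1\<in>ball x0 \<epsilon>'. \<xi> x1 \<noteq> 0")
      case True
      then obtain x1 where x1: "x1 \<in> ball x0 \<epsilon>'" "\<xi> x1 \<noteq> 0" by blast
      from nonzero_ball[OF open_ball cxi x1] obtain e2 where
        e2: "e2 > 0" "ball x1 e2 \<subseteq> ball x0 \<epsilon>'" "\<forall>y\<in>ball x1 e2. \<xi> y \<noteq> 0" by blast
      have J1: "ball x1 e2 \<subseteq> J0" using e2(2) \<epsilon>'(2) by blast
      show ?thesis by (rule caseC[OF sr sh sxi oI0 \<epsilon>(2) \<epsilon>(1) zt J1 e2(1) e2(3)])
    next
      case False
      then have zx: "\<forall>x\<in>ball x0 \<epsilon>'. \<xi> x = 0" by blast
      show ?thesis
      proof (cases "\<exists>t1\<in>ball t0 \<epsilon>. h t1 \<noteq> 0")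
        case True
        then obtain t1 where t1: "t1 \<in> ball t0 \<epsilon>" "h t1 \<noteq> 0" by blast
        from nonzero_ball[OF open_ball ch t1] obtain e3 where
          e3: "e3 > 0" "ball t1 e3 \<subseteq> ball t0 \<epsilon>" "\<forall>y\<in>ball t1 e3. h y \<noteq> 0" by blast
        have I1: "ball t1 e3 \<subseteq> I0" using e3(2) \<epsilon>(2) by blast
        have z: "\<forall>t\<in>ball t1 e3. \<tau> t = 0 \<and> h t \<noteq> 0" using zt e3 by blast
        show ?thesis by (rule caseD1[OF sr sh oI0 I1 e3(1) \<epsilon>'(2) \<epsilon>'(1) z zx])
      next
        case False
        then have zh: "\<forall>t\<in>ball t0 \<epsilon>. h t = 0" by blast
        have t0b: "t0 \<in> ball t0 \<epsilon>" and x0b: "x0 \<in> ball x0 \<epsilon>'" using \<epsilon> \<epsilon>' by auto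
        have r0: "r (t0, x0) \<noteq> 0" using Q0 zt zh zx t0b x0b by (auto simp: Qfield_def zero_prod_def)
        show ?thesis
          by (rule coreD2[OF \<epsilon>(2) \<epsilon>'(2) _ _ _ _ t0b x0b _ zx])
             (use zt zh r0 in \<open>auto simp: is_interval_ball_real\<close>)
      qed
    qed
  qed
  then show ?thesis unfolding good_def .
qed


end
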